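(* Let $W\in\{\mathrm{A}_{\frac12\infty},\mathrm{D}_{\frac12\infty}\}$, let $C_W$ be the set of critical points of $f_W:\mathbb{C}^2\to\mathbb{C}$, and put $C_{W,0}=C_W\cap f_W^{-1}(0)$, $C_{W,1}=C_W\cap f_W^{-1}(1)$. Then: (i) $C_W\subset\mathbb{R}^2$; (ii) at every critical point the Hessian of $f_W|_{\mathbb{R}^2}$ is non-degenerate; it is indefinite at points of $C_{W,0}$ and negative definite at points of $C_{W,1}$; (iii) $C_{W,0}$ is exactly the set of nodes of the real curve $X_{W,0,\mathbb{R}}:=\mathbb{R}^2\cap f_W^{-1}(0)$, and the map $c\mapsto B_c:=$ (the bounded connected component of $\mathbb{R}^2\setminus X_{W,0,\mathbb{R}}$ containing $c$) is a bijection from $C_{W,1}$ onto the set of bounded connected components of $\mathbb{R}^2\setminus X_{W,0,\mathbb{R}}$.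
   Context: Let $s(x)=\frac{\sin\sqrt{x}}{\sqrt{x}}=\prod_{n\ge1}\big(1-\frac{x}{n^2\pi^2}\big)$ and $c(x)=\cos\sqrt{x}=\prod_{n\ge1}\big(1-\frac{4x}{(2n-1)^2\pi^2}\big)$. Define $f_{\mathrm{A}_{\frac12\infty}}(x,y)=xs(x)^2-y^2$ and $f_{\mathrm{D}_{\frac12\infty}}(x,y)=xs(x)^2-xy^2$ on $\mathbb{C}^2$; they are real on $\mathbb{R}^2$. A node of the real curve $X_{W,0,\mathbb{R}}$ is a point of it at which two local smooth irreducible branches cross transversally. *)

theory Defs
  imports "HOL-Analysis.Analysis"
begin

text \<open>s(x) = sin(sqrt x)/sqrt x, an entire function (value 1 at 0; independent of the branch of sqrt).\<close>
definition s_fun :: "complex \<Rightarrow> complex" where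
  "s_fun z = (if z = 0 then 1 else sin (csqrt z) / csqrt z)"

datatype W_type = A_half_inf | D_half_inf

definition f_W :: "W_type \<Rightarrow> complex \<times> complex \<Rightarrow> complex" where
  "f_W W p = (case W of
      A_half_inf \<Rightarrow> fst p * (s_fun (fst p))\<^sup>2 - (snd p)\<^sup>2
    | D_half_inf \<Rightarrow> fst p * (s_fun (fst p))\<^sup>2 - fst p * (snd p)\<^sup>2)"

definition crit_W :: "W_type \<Rightarrow> (complex \<times> complex) set" where
  "crit_W W = {p. (f_W W has_derivative (\<lambda>_. 0)) (at p)}"

text \<open>The real plane R^2 inside C^2, and the restriction of f_W to it (real-valued there).\<close>
definition realpt :: "real \<times> real \<Rightarrow> complex \<times> complex" where
  "realpt q = (complex_of_real (fst q), complex_of_real (snd q))"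

definition fR_W :: "W_type \<Rightarrow> real \<times> real \<Rightarrow> real" where
  "fR_W W q = Re (f_W W (realpt q))"

definition pd :: "nat \<Rightarrow> (real \<times> real \<Rightarrow> real) \<Rightarrow> real \<times> real \<Rightarrow> real" where
  "pd i g q = (if i = 1 then deriv (\<lambda>t. g (t, snd q)) (fst q)
               else deriv (\<lambda>t. g (fst q, t)) (snd q))"

definition hessian :: "(real \<times> real \<Rightarrow> real) \<Rightarrow> real \<times> real \<Rightarrow> real^2^2" where
  "hessian g q = (\<chi> i j. pd (if i = 1 then 1 else 2) (pd (if j = 1 then 1 else 2) g) q)"

definition nondegenerate :: "real^2^2 \<Rightarrow> bool" where
  "nondegenerate H \<longleftrightarrow> det H \<noteq> 0"

definition indefinite :: "real^2^2 \<Rightarrow> bool" where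
  "indefinite H \<longleftrightarrow> (\<exists>v. v \<bullet> (H *v v) > 0) \<and> (\<exists>w. w \<bullet> (H *v w) < 0)"

definition neg_definite :: "real^2^2 \<Rightarrow> bool" where
  "neg_definite H \<longleftrightarrow> (\<forall>v. v \<noteq> 0 \<longrightarrow> v \<bullet> (H *v v) < 0)"

definition XR_W :: "W_type \<Rightarrow> (real \<times> real) set" where
  "XR_W W = {q. f_W W (realpt q) = 0}"

definition branch :: "(real \<Rightarrow> real \<times> real) \<Rightarrow> real \<Rightarrow> real \<times> real \<Rightarrow> bool" where
  "branch \<gamma> e p \<longleftrightarrow> e > 0 \<and> \<gamma> C1_differentiable_on {-e<..<e} \<and> inj_on \<gamma> {-e<..<e} \<and>
     \<gamma> 0 = p \<and> (\<forall>t\<in>{-e<..<e}. vector_derivative \<gamma> (at t) \<noteq> 0)"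

definition is_node :: "(real \<times> real) set \<Rightarrow> real \<times> real \<Rightarrow> bool" where
  "is_node X p \<longleftrightarrow> p \<in> X \<and> (\<exists>U e \<gamma>1 \<gamma>2. open U \<and> p \<in> U \<and> branch \<gamma>1 e p \<and> branch \<gamma>2 e p \<and>
     \<gamma>1 ` {-e<..<e} \<subseteq> U \<and> \<gamma>2 ` {-e<..<e} \<subseteq> U \<and>
     X \<inter> U = \<gamma>1 ` {-e<..<e} \<union> \<gamma>2 ` {-e<..<e} \<and>
     (let v = vector_derivative \<gamma>1 (at 0); w = vector_derivative \<gamma>2 (at 0)
      in fst v * snd w - snd v * fst w \<noteq> 0))"

end

theory Submission
  imports Defs "HOL-Complex_Analysis.Complex_Analysis"
begin

lemma s_sq: assumes "u \<noteq> 0" shows "s_fun (u\<^sup>2) = sin u / u"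
proof -
  have u2: "u\<^sup>2 \<noteq> 0" using assms by simp
  define c where "c = csqrt (u\<^sup>2)"
  have "c\<^sup>2 = u\<^sup>2" by (simp add: c_def)
  hence "(c - u) * (c + u) = 0" by (simp add: algebra_simps power2_eq_square)
  hence "c = u \<or> c = -u" by (auto simp: eq_neg_iff_add_eq_0)
  thus ?thesis using u2 unfolding s_fun_def c_def[symmetric] by auto
qed

lemma s_alt: "z \<noteq> 0 \<Longrightarrow> s_fun z = sin (\<i> * csqrt (-z)) / (\<i> * csqrt (-z))"
proof -
  assume z: "z \<noteq> 0"
  have "(\<i> * csqrt (-z))\<^sup>2 = z" by (simp add: power_mult_distrib)
  moreover have "\<i> * csqrt (-z) \<noteq> 0" using z by simp
  ultimately show ?thesis using s_sq by metis
qed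

lemma s_diff_nz: assumes "w \<noteq> 0" shows "s_fun field_differentiable at w"
proof (cases "w \<in> \<real>\<^sub>\<le>\<^sub>0")
  case False
  have "(\<lambda>z. sin (csqrt z) / csqrt z) holomorphic_on (-\<real>\<^sub>\<le>\<^sub>0)"
    by (intro holomorphic_intros) auto
  hence fd: "(\<lambda>z. sin (csqrt z) / csqrt z) field_differentiable at w"
    using False holomorphic_on_imp_differentiable_at[OF _ open_Compl[OF closed_nonpos_Reals_complex]] by blast
  show ?thesis
    by (rule field_differentiable_transform_within[where d="norm w", OF _ _ _ fd])
       (use assms in \<open>simp_all add: s_fun_def\<close>, metis dist_0_norm dist_commute less_irrefl)
next
  case True
  hence "-w \<notin> \<real>\<^sub>\<le>\<^sub>0" using assms
    by (auto simp: complex_nonpos_Reals_iff complex_eq_iff)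
  have "(\<lambda>z. sin (\<i> * csqrt (-z)) / (\<i> * csqrt (-z))) holomorphic_on {z. -z \<notin> \<real>\<^sub>\<le>\<^sub>0}"
    by (intro holomorphic_intros) auto
  moreover have "open {z::complex. -z \<notin> \<real>\<^sub>\<le>\<^sub>0}"
  proof -
    have "open ((uminus::complex\<Rightarrow>complex) -` (-\<real>\<^sub>\<le>\<^sub>0))"
      by (rule continuous_open_vimage) (auto intro!: continuous_intros)
    thus ?thesis by (simp add: vimage_def)
  qed
  ultimately have fd: "(\<lambda>z. sin (\<i> * csqrt (-z)) / (\<i> * csqrt (-z))) field_differentiable at w"
    using \<open>-w \<notin> \<real>\<^sub>\<le>\<^sub>0\<close> holomorphic_on_imp_differentiable_at by blast
  show ?thesis
    by (rule field_differentiable_transform_within[where d="norm w", OF _ _ _ fd])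
       (use assms in \<open>simp_all\<close>, metis s_alt dist_0_norm dist_commute less_irrefl)
qed

lemma s_lim0: "(s_fun \<longlongrightarrow> 1) (at 0)"
proof -
  have d: "((\<lambda>u::complex. sin u / u) \<longlongrightarrow> 1) (at 0)"
    using DERIV_sin[of 0] unfolding has_field_derivative_iff by simp
  have c: "filterlim csqrt (at 0) (at (0::complex))"
  proof (rule filterlim_atI)
    have "((\<lambda>z. norm (csqrt z)) \<longlongrightarrow> 0) (at (0::complex))"
      using tendsto_real_sqrt[OF tendsto_norm_zero[OF tendsto_ident_at[of 0 UNIV]]] by simp
    thus "(csqrt \<longlongrightarrow> 0) (at (0::complex))" by (rule tendsto_norm_zero_iff[THEN iffD1])
    show "\<forall>\<^sub>F x in at 0. csqrt x \<noteq> 0" by (auto simp: eventually_at_filter)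
  qed
  have "((\<lambda>z. sin (csqrt z) / csqrt z) \<longlongrightarrow> 1) (at 0)"
    using filterlim_compose[OF d c] by (simp add: o_def)
  then show ?thesis
    apply (rule tendsto_cong[THEN iffD1, rotated])
    by (auto simp: eventually_at_filter s_fun_def)
qed

lemma s_holo: "s_fun holomorphic_on UNIV"
proof (rule no_isolated_singularity'[where K="{0}"])
  show "(s_fun \<longlongrightarrow> s_fun z) (at z within UNIV)" if "z \<in> {0}" for z
    using s_lim0 that by (simp add: s_fun_def)
  show "s_fun holomorphic_on UNIV - {0}"
    using s_diff_nz by (auto simp: holomorphic_on_def field_differentiable_at_within)
qed auto


definition G :: "complex \<Rightarrow> complex" where "G z = z * (s_fun z)\<^sup>2"

lemma G_holo: "G holomorphic_on UNIV"
  unfolding G_def[abs_def] by (intro holomorphic_intros s_holo)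

lemma s_diff: "s_fun field_differentiable at w"
  using s_holo holomorphic_on_imp_differentiable_at by blast

lemma G_deriv_pos: assumes "0 < Re z" shows "(G has_field_derivative s_fun (4*z)) (at z)"
proof -
  have z: "z \<notin> \<real>\<^sub>\<le>\<^sub>0" "z \<noteq> 0" using assms by (auto simp: complex_nonpos_Reals_iff)
  let ?c = "csqrt z"
  have c0: "?c \<noteq> 0" using z by simp
  have d: "((\<lambda>u. (sin (csqrt u))\<^sup>2) has_field_derivative
       (2 * sin ?c * (cos ?c * (1 / (2 * ?c))))) (at z)"
    using z by (auto intro!: derivative_eq_intros)
  have "s_fun (4*z) = sin (2*?c) / (2*?c)"
    using s_sq[of "2*?c"] c0 by (simp add: power_mult_distrib)
  also have "\<dots> = 2 * sin ?c * (cos ?c * (1 / (2 * ?c)))"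
    using c0 by (simp only: sin_double) (simp add: field_simps)
  finally have e: "s_fun (4*z) = 2 * sin ?c * (cos ?c * (1 / (2 * ?c)))" .
  have eq: "G u = (sin (csqrt u))\<^sup>2" for u
  proof (cases "u = 0")
    case True thus ?thesis by (simp add: G_def)
  next
    case False
    hence "csqrt u \<noteq> 0" by simp
    thus ?thesis using False by (simp add: G_def s_fun_def power_divide)
  qed
  have "G = (\<lambda>u. (sin (csqrt u))\<^sup>2)" by (rule ext, rule eq)
  thus ?thesis using d e by simp
qed

lemma deriv_G: "deriv G z = s_fun (4*z)"
proof (rule analytic_continuation_open[where s="{z. 0 < Re z}" and s'=UNIV and f="deriv G" and g="\<lambda>z. s_fun (4*z)"])
  show "open {z. 0 < Re z}" by (intro open_Collect_less continuous_intros)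
  show "{z. 0 < Re z} \<noteq> {}" by (auto intro!: exI[of _ 1])
  show "deriv G holomorphic_on UNIV" by (intro holomorphic_deriv G_holo) auto
  show "(\<lambda>z. s_fun (4*z)) holomorphic_on UNIV"
    using holomorphic_on_compose[of "\<lambda>z. 4*z" UNIV s_fun] s_holo
    by (auto simp: o_def intro: holomorphic_on_subset holomorphic_intros)
  show "deriv G z = s_fun (4*z)" if "z \<in> {z. 0 < Re z}" for z
    using G_deriv_pos that DERIV_imp_deriv by auto
qed auto

lemma G_has_deriv: "(G has_field_derivative s_fun (4*z)) (at z)"
  using G_holo deriv_G holomorphic_derivI[of G UNIV z] by auto

lemma s_zero_iff: "s_fun w = 0 \<longleftrightarrow> (\<exists>n::int. n \<noteq> (0::int) \<and> w = (of_real (of_int n * pi))\<^sup>2)"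
proof
  assume h: "s_fun w = 0"
  hence w: "w \<noteq> 0" by (auto simp: s_fun_def)
  hence "sin (csqrt w) = 0" using h by (simp add: s_fun_def)
  then obtain n::int where n: "csqrt w = of_real (n * pi)" using sin_eq_0 by blast
  hence "n \<noteq> 0" using w by auto
  moreover have "w = (of_real (n * pi))\<^sup>2" using n power2_csqrt[of w] by simp
  ultimately show "\<exists>n::int. n \<noteq> (0::int) \<and> w = (of_real (of_int n * pi))\<^sup>2" by blast
next
  assume "\<exists>n::int. n \<noteq> (0::int) \<and> w = (of_real (of_int n * pi))\<^sup>2"
  then obtain n::int where n: "n \<noteq> 0" "w = (of_real (of_int n * pi))\<^sup>2" by blast
  have "of_real (n*pi) \<noteq> (0::complex)" using n by simp
  hence "s_fun w = sin (of_real (n*pi)) / of_real (n*pi)" using s_sq n by simp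
  also have "sin (of_real (n*pi)) = (0::complex)"
    by (metis sin_of_real sin_npi_int of_real_0 mult.commute)
  finally show "s_fun w = 0" by simp
qed


lemma real_restr:
  assumes hol: "F holomorphic_on UNIV" and re: "\<And>x. Im (F (of_real x)) = 0"
  shows "Im (deriv F (of_real x)) = 0"
    and "((\<lambda>t. Re (F (of_real t))) has_real_derivative Re (deriv F (of_real x))) (at x)"
proof -
  have d: "(F has_field_derivative deriv F (of_real x)) (at (of_real x))"
    using hol holomorphic_derivI[of F UNIV] by auto
  have v: "((\<lambda>t. F (of_real t)) has_vector_derivative deriv F (of_real x)) (at x)"
    by (rule has_vector_derivative_real_field[OF d])
  have "((\<lambda>t. Im (F (of_real t))) has_real_derivative Im (deriv F (of_real x))) (at x)"
    by (rule has_field_derivative_Im[OF v])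
  hence "((\<lambda>t. 0) has_real_derivative Im (deriv F (of_real x))) (at x)" using re by simp
  thus "Im (deriv F (of_real x)) = 0"
    using DERIV_unique[OF _ DERIV_const] by blast
  show "((\<lambda>t. Re (F (of_real t))) has_real_derivative Re (deriv F (of_real x))) (at x)"
    by (rule has_field_derivative_Re[OF v])
qed

definition sR :: "real \<Rightarrow> real" where "sR x = Re (s_fun (of_real x))"

lemma sR_pos: assumes "0 < x" shows "sR x = sin (sqrt x) / sqrt x"
  and "s_fun (of_real x) = of_real (sin (sqrt x) / sqrt x)"
proof -
  have "s_fun (of_real x) = of_real (sin (sqrt x) / sqrt x)"
    using assms by (simp add: s_fun_def csqrt_of_real sin_of_real)
  thus "s_fun (of_real x) = of_real (sin (sqrt x) / sqrt x)" "sR x = sin (sqrt x) / sqrt x"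
    by (simp_all add: sR_def)
qed

lemma s_real_Im: "Im (s_fun (of_real x)) = 0"
proof (cases "x < 0")
  case True
  define r where "r = sqrt (-x)"
  have r: "csqrt (- of_real x) = of_real r" unfolding r_def
    using True csqrt_of_real[of "-x"] by simp
  have "s_fun (of_real x) = sin (\<i> * of_real r) / (\<i> * of_real r)"
    using s_alt[of "of_real x"] True r by simp
  also have "\<dots> = (\<i> * ((exp (of_real r) - inverse (exp (of_real r))) / 2)) / (\<i> * of_real r)"
    by (simp only: sin_i_times)
  also have "\<dots> = ((exp (of_real r) - inverse (exp (of_real r))) / 2) / of_real r"
    by (rule mult_divide_mult_cancel_left) simp
  also have "\<dots> = of_real ((exp r - inverse (exp r)) / 2 / r)"
    by (simp add: exp_of_real)
  finally show ?thesis by simp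
next
  case False
  show ?thesis
  proof (cases "x = 0")
    case True thus ?thesis by (simp add: s_fun_def)
  next
    case False thus ?thesis using \<open>\<not> x < 0\<close> sR_pos(2)[of x] by simp
  qed
qed

lemma s_real: "s_fun (of_real x) = of_real (sR x)"
  using s_real_Im[of x] by (simp add: sR_def complex_eq_iff)

lemma sR_0 [simp]: "sR 0 = 1" by (simp add: sR_def s_fun_def)

definition sRd :: "real \<Rightarrow> real" where "sRd x = Re (deriv s_fun (of_real x))"

lemma sR_deriv: "(sR has_real_derivative sRd x) (at x)"
  using real_restr(2)[OF s_holo s_real_Im] unfolding sRd_def sR_def[abs_def] .

lemma sRd_cont: "continuous_on UNIV sRd"
proof -
  have "continuous_on UNIV (deriv s_fun)"
    using holomorphic_on_imp_continuous_on[OF holomorphic_deriv[OF s_holo]] by simp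
  hence "continuous_on UNIV (\<lambda>x. Re (deriv s_fun (of_real x)))"
    by (intro continuous_intros) (auto intro: continuous_on_compose2[of UNIV "deriv s_fun"] continuous_intros)
  thus ?thesis unfolding sRd_def[abs_def] .
qed

lemma sR_cont: "continuous_on UNIV sR"
  using sR_deriv by (meson DERIV_isCont continuous_at_imp_continuous_on)

lemma sR_sq: assumes "n \<noteq> 0" shows "sR ((real n * pi)\<^sup>2) = 0"
proof -
  have "sR ((real n * pi)\<^sup>2) = sin (real n * pi) / (real n * pi)"
    using assms by (simp add: sR_pos)
  thus ?thesis by simp
qed

lemma sRd_sq: assumes "n \<noteq> 0" shows "sRd ((real n * pi)\<^sup>2) = (-1)^n / (2 * (real n * pi)\<^sup>2)"
proof -
  define w where "w = (real n * pi)\<^sup>2"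
  define c where "c = real n * pi"
  have c: "c > 0" using assms by (simp add: c_def)
  have wc2: "w = c\<^sup>2" by (simp add: w_def c_def)
  have w: "w > 0" "sqrt w = c" using c by (auto simp: wc2)
  have wc: "(of_real w :: complex) \<notin> \<real>\<^sub>\<le>\<^sub>0" using w by (simp add: complex_nonpos_Reals_iff)
  have d: "((\<lambda>z. sin (csqrt z) / csqrt z) has_field_derivative
     (cos (csqrt (of_real w)) * (1 / (2 * csqrt (of_real w))) * csqrt (of_real w) - sin (csqrt (of_real w)) * (1 / (2 * csqrt (of_real w))))
       / (csqrt (of_real w) * csqrt (of_real w))) (at (of_real w))"
    using wc w by (auto intro!: derivative_eq_intros simp: csqrt_of_real)
  have d2: "(s_fun has_field_derivative
     (cos (csqrt (of_real w)) * (1 / (2 * csqrt (of_real w))) * csqrt (of_real w) - sin (csqrt (of_real w)) * (1 / (2 * csqrt (of_real w))))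
       / (csqrt (of_real w) * csqrt (of_real w))) (at (of_real w))"
    by (rule has_field_derivative_transform_within_open[OF d, where S="-{0}"])
       (use w in \<open>auto simp: s_fun_def\<close>)
  have "deriv s_fun (of_real w) = (cos (csqrt (of_real w)) * (1 / (2 * csqrt (of_real w))) * csqrt (of_real w) - sin (csqrt (of_real w)) * (1 / (2 * csqrt (of_real w))))
       / (csqrt (of_real w) * csqrt (of_real w))" using DERIV_imp_deriv[OF d2] .
  also have "\<dots> = of_real ((cos c * (1 / (2*c)) * c - sin c * (1/(2*c))) / (c*c))"
    using w by (simp add: csqrt_of_real cos_of_real sin_of_real)
  also have "sin c = 0" by (simp add: c_def)
  also have "cos c = (-1)^n" by (simp add: c_def)
  finally have "deriv s_fun (of_real w) = of_real ((-1)^n / (2 * c\<^sup>2))"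
    using c by (simp add: field_simps power2_eq_square)
  thus ?thesis by (simp add: sRd_def w_def c_def)
qed

definition gR :: "real \<Rightarrow> real" where "gR x = x * (sR x)\<^sup>2"

lemma G_real: "G (of_real x) = of_real (gR x)"
  by (simp add: G_def gR_def s_real)

lemma G_real_Im: "Im (G (of_real x)) = 0" by (simp add: G_real)

lemma gR_deriv: "(gR has_real_derivative sR (4*x)) (at x)"
proof -
  have "gR = (\<lambda>t. Re (G (of_real t)))" by (simp add: G_real fun_eq_iff)
  moreover have "Re (deriv G (of_real x)) = sR (4*x)"
    by (simp add: deriv_G sR_def)
  ultimately show ?thesis using real_restr(2)[OF G_holo G_real_Im, of x] by simp
qed


lemma fA: "f_W A_half_inf p = G (fst p) - (snd p)\<^sup>2" by (simp add: f_W_def G_def)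
lemma fD: "f_W D_half_inf p = G (fst p) - fst p * (snd p)\<^sup>2" by (simp add: f_W_def G_def)

lemma Gfst: "((\<lambda>q. G (fst q)) has_derivative (\<lambda>h. s_fun (4 * fst p) * fst h)) (at p)"
proof -
  have "((\<lambda>q. G (fst q)) has_derivative (\<lambda>h. (*) (s_fun (4 * fst p)) (fst h))) (at p)"
    by (rule has_derivative_compose[OF has_derivative_fst[OF has_derivative_ident]])
       (use G_has_deriv[of "fst p"] in \<open>simp add: has_field_derivative_def\<close>)
  thus ?thesis by simp
qed

lemma snd_der: "((\<lambda>q::complex\<times>complex. snd q) has_derivative (\<lambda>h. snd h)) (at p)"
  by (auto intro: has_derivative_snd[OF has_derivative_ident, simplified])
lemma fst_der: "((\<lambda>q::complex\<times>complex. fst q) has_derivative (\<lambda>h. fst h)) (at p)"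
  by (auto intro: has_derivative_fst[OF has_derivative_ident, simplified])

lemma fA_der: "(f_W A_half_inf has_derivative (\<lambda>h. s_fun (4 * fst p) * fst h - 2 * snd p * snd h)) (at p)"
proof -
  have "((\<lambda>q. G (fst q) - snd q * snd q) has_derivative (\<lambda>h. s_fun (4 * fst p) * fst h - (snd p * snd h + snd h * snd p))) (at p)"
    by (intro has_derivative_diff Gfst has_derivative_mult snd_der)
  hence "((\<lambda>q. G (fst q) - snd q * snd q) has_derivative (\<lambda>h. s_fun (4 * fst p) * fst h - 2 * snd p * snd h)) (at p)"
    by (rule has_derivative_eq_rhs) (simp add: fun_eq_iff algebra_simps)
  thus ?thesis by (simp add: fA[abs_def] power2_eq_square)
qed

lemma fD_der: "(f_W D_half_inf has_derivative (\<lambda>h. (s_fun (4 * fst p) - (snd p)\<^sup>2) * fst h - 2 * fst p * snd p * snd h)) (at p)"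
proof -
  have "((\<lambda>q. G (fst q) - fst q * (snd q * snd q)) has_derivative (\<lambda>h. s_fun (4 * fst p) * fst h - (fst p * (snd p * snd h + snd h * snd p) + fst h * (snd p * snd p)))) (at p)"
    by (intro has_derivative_diff Gfst has_derivative_mult snd_der fst_der)
  hence "((\<lambda>q. G (fst q) - fst q * (snd q * snd q)) has_derivative (\<lambda>h. (s_fun (4 * fst p) - (snd p)\<^sup>2) * fst h - 2 * fst p * snd p * snd h)) (at p)"
    by (rule has_derivative_eq_rhs) (simp add: fun_eq_iff algebra_simps power2_eq_square)
  thus ?thesis by (simp add: fD[abs_def] power2_eq_square)
qed

lemma critA: "p \<in> crit_W A_half_inf \<longleftrightarrow> s_fun (4 * fst p) = 0 \<and> snd p = 0"
proof
  assume "p \<in> crit_W A_half_inf"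
  hence "(f_W A_half_inf has_derivative (\<lambda>_. 0)) (at p)" by (simp add: crit_W_def)
  hence e: "(\<lambda>h. s_fun (4 * fst p) * fst h - 2 * snd p * snd h) = (\<lambda>_. 0)"
    using has_derivative_unique fA_der by blast
  from fun_cong[OF e, of "(1,0)"] fun_cong[OF e, of "(0,1)"]
  show "s_fun (4 * fst p) = 0 \<and> snd p = 0" by simp
next
  assume "s_fun (4 * fst p) = 0 \<and> snd p = 0"
  thus "p \<in> crit_W A_half_inf" using fA_der[of p] by (simp add: crit_W_def)
qed

lemma critD: "p \<in> crit_W D_half_inf \<longleftrightarrow> s_fun (4 * fst p) = (snd p)\<^sup>2 \<and> fst p * snd p = 0"
proof
  assume "p \<in> crit_W D_half_inf"
  hence "(f_W D_half_inf has_derivative (\<lambda>_. 0)) (at p)" by (simp add: crit_W_def)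
  hence e: "(\<lambda>h. (s_fun (4 * fst p) - (snd p)\<^sup>2) * fst h - 2 * fst p * snd p * snd h) = (\<lambda>_. 0)"
    using has_derivative_unique fD_der by blast
  from fun_cong[OF e, of "(1,0)"] fun_cong[OF e, of "(0,1)"]
  show "s_fun (4 * fst p) = (snd p)\<^sup>2 \<and> fst p * snd p = 0" by simp
next
  assume h: "s_fun (4 * fst p) = (snd p)\<^sup>2 \<and> fst p * snd p = 0"
  have "(\<lambda>h. (s_fun (4 * fst p) - (snd p)\<^sup>2) * fst h - 2 * fst p * snd p * snd h) = (\<lambda>_. 0)"
    using h by (simp add: fun_eq_iff)
  thus "p \<in> crit_W D_half_inf" using fD_der[of p] by (simp add: crit_W_def)
qed

lemma s4zero: "s_fun (4*z) = 0 \<longleftrightarrow> (\<exists>m::nat. m \<ge> 1 \<and> z = of_real ((real m * pi / 2)\<^sup>2))"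
proof
  assume "s_fun (4*z) = 0"
  then obtain n::int where n: "n \<noteq> 0" "4*z = (of_real (of_int n * pi))\<^sup>2"
    using s_zero_iff by blast
  define m where "m = nat \<bar>n\<bar>"
  have m: "m \<ge> 1" using n by (simp add: m_def)
  have "(of_int n * pi)\<^sup>2 = (real m * pi)\<^sup>2"
    by (simp add: m_def power_mult_distrib)
  hence "4*z = of_real ((real m * pi)\<^sup>2)" using n(2) by (metis of_real_power)
  hence "z = of_real ((real m * pi / 2)\<^sup>2)" by (simp add: power_divide field_simps)
  thus "\<exists>m::nat. m \<ge> 1 \<and> z = of_real ((real m * pi / 2)\<^sup>2)" using m by blast
next
  assume "\<exists>m::nat. m \<ge> 1 \<and> z = of_real ((real m * pi / 2)\<^sup>2)"
  then obtain m::nat where m: "m \<ge> 1" "z = of_real ((real m * pi / 2)\<^sup>2)" by blast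
  have "4*z = (of_real (of_int (int m) * pi))\<^sup>2"
    using m by (simp add: power_divide power_mult_distrib) (metis mult.commute)
  moreover have "int m \<noteq> 0" using m by simp
  ultimately show "s_fun (4*z) = 0" using s_zero_iff by blast
qed

definition Pt :: "nat \<Rightarrow> real \<times> real" where "Pt m = ((real m * pi / 2)\<^sup>2, 0)"

definition CritR :: "W_type \<Rightarrow> (real \<times> real) set" where
  "CritR W = Pt ` {1..} \<union> (if W = D_half_inf then {(0,1),(0,-1)} else {})"

lemma realpt_CritR: "realpt ` CritR W = (\<lambda>m. (of_real ((real m * pi / 2)\<^sup>2), 0)) ` {1..} \<union>
   (if W = D_half_inf then {(0,1),(0,-1)} else {})"
  unfolding CritR_def image_Un image_image by (cases W) (simp_all add: realpt_def Pt_def)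

lemma crit_eq: "crit_W W = realpt ` CritR W"
proof (cases W)
  case A_half_inf
  have "crit_W W = {p. s_fun (4 * fst p) = 0 \<and> snd p = 0}"
    unfolding A_half_inf using critA by blast
  also have "\<dots> = realpt ` CritR W"
    unfolding realpt_CritR s4zero A_half_inf by (auto simp: image_iff)
  finally show ?thesis .
next
  case D_half_inf
  have pt: "(s_fun (4 * a) = b\<^sup>2 \<and> a * b = 0) \<longleftrightarrow> (a = 0 \<and> (b = 1 \<or> b = -1)) \<or> (b = 0 \<and> s_fun (4 * a) = 0)" for a b
  proof (cases "a = 0")
    case True
    have "s_fun (4*a) = 1" using True by (simp add: s_fun_def)
    thus ?thesis using True by (auto simp: power2_eq_1_iff)
  next
    case False thus ?thesis by auto
  qed
  have "crit_W W = {p. (fst p = 0 \<and> (snd p = 1 \<or> snd p = -1)) \<or> (snd p = 0 \<and> s_fun (4 * fst p) = 0)}"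
    unfolding D_half_inf by (rule set_eqI) (simp only: mem_Collect_eq critD pt)
  also have "\<dots> = realpt ` CritR W"
    unfolding realpt_CritR s4zero D_half_inf by (auto simp: image_iff)
  finally show ?thesis .
qed

lemma Re_realpt [simp]: "(Re (fst (realpt q)), Re (snd (realpt q))) = q"
  by (cases q) (simp add: realpt_def)

lemma sin_half_sq: "(sin (real m * pi / 2))\<^sup>2 = (if even m then 0 else 1)"
proof (cases "even m")
  case True
  then obtain k where "m = 2*k" by blast
  thus ?thesis by simp
next
  case False
  then obtain k where k: "m = 2*k+1" using oddE by blast
  have "sin (real m * pi / 2) = sin (real k * pi + pi/2)" by (simp add: k field_simps)
  also have "\<dots> = cos (real k * pi)" by (simp add: sin_add)
  also have "\<dots> = (-1)^k" by simp
  finally show ?thesis using False by (simp add: power_mult_distrib flip: power_mult)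
qed

lemma gR_Pt: assumes "m \<ge> 1" shows "gR ((real m * pi / 2)\<^sup>2) = (if even m then 0 else 1)"
proof -
  define c where "c = real m * pi / 2"
  have c: "c > 0" using assms by (simp add: c_def)
  have "gR (c\<^sup>2) = (sin c)\<^sup>2" using c by (simp add: gR_def sR_pos power_divide)
  thus ?thesis using sin_half_sq[of m] by (simp add: c_def)
qed

lemma f_realpt: "f_W W (realpt (x,y)) = of_real (case W of A_half_inf \<Rightarrow> gR x - y\<^sup>2 | D_half_inf \<Rightarrow> gR x - x * y\<^sup>2)"
  by (cases W) (simp_all add: fA fD realpt_def G_real)


lemma fR_A: "fR_W A_half_inf = (\<lambda>q. gR (fst q) - (snd q)\<^sup>2)"
  by (rule ext) (simp add: fR_W_def f_realpt[of _ "fst q" "snd q" for q, simplified])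
lemma fR_D: "fR_W D_half_inf = (\<lambda>q. gR (fst q) - fst q * (snd q)\<^sup>2)"
  by (rule ext) (simp add: fR_W_def f_realpt[of _ "fst q" "snd q" for q, simplified])

lemma sR4_deriv: "((\<lambda>t. sR (4*t)) has_real_derivative 4 * sRd (4*x)) (at x)"
proof -
  have "((\<lambda>t. sR (4*t)) has_real_derivative sRd (4*x) * 4) (at x)"
    by (rule DERIV_chain2[OF sR_deriv]) (auto intro!: derivative_eq_intros)
  thus ?thesis by (simp add: mult.commute)
qed

lemma pd1A: "pd 1 (fR_W A_half_inf) = (\<lambda>q. sR (4 * fst q))"
proof (rule ext)
  fix q :: "real \<times> real"
  have "((\<lambda>t. gR t - (snd q)\<^sup>2) has_real_derivative sR (4 * fst q) - 0) (at (fst q))"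
    by (intro DERIV_diff gR_deriv DERIV_const)
  thus "pd 1 (fR_W A_half_inf) q = sR (4 * fst q)"
    by (simp add: pd_def fR_A DERIV_imp_deriv)
qed

lemma pd2A: "pd 2 (fR_W A_half_inf) = (\<lambda>q. - 2 * snd q)"
proof (rule ext)
  fix q :: "real \<times> real"
  have "((\<lambda>t. gR (fst q) - t\<^sup>2) has_real_derivative - 2 * snd q) (at (snd q))"
    by (auto intro!: derivative_eq_intros)
  thus "pd 2 (fR_W A_half_inf) q = - 2 * snd q"
    by (simp add: pd_def fR_A DERIV_imp_deriv)
qed

lemma pd1D: "pd 1 (fR_W D_half_inf) = (\<lambda>q. sR (4 * fst q) - (snd q)\<^sup>2)"
proof (rule ext)
  fix q :: "real \<times> real"
  have "((\<lambda>t. gR t - t * (snd q)\<^sup>2) has_real_derivative sR (4 * fst q) - 1 * (snd q)\<^sup>2) (at (fst q))"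
  proof (rule DERIV_diff[OF gR_deriv])
    show "((\<lambda>t. t * (snd q)\<^sup>2) has_real_derivative 1 * (snd q)\<^sup>2) (at (fst q))"
      by (auto intro!: derivative_eq_intros)
  qed
  thus "pd 1 (fR_W D_half_inf) q = sR (4 * fst q) - (snd q)\<^sup>2"
    by (simp add: pd_def fR_D DERIV_imp_deriv)
qed

lemma pd2D: "pd 2 (fR_W D_half_inf) = (\<lambda>q. - 2 * fst q * snd q)"
proof (rule ext)
  fix q :: "real \<times> real"
  have "((\<lambda>t. gR (fst q) - fst q * t\<^sup>2) has_real_derivative - 2 * fst q * snd q) (at (snd q))"
    by (auto intro!: derivative_eq_intros)
  thus "pd 2 (fR_W D_half_inf) q = - 2 * fst q * snd q"
    by (simp add: pd_def fR_D DERIV_imp_deriv)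
qed

lemma hess_entries: "hessian g q $ 1 $ 1 = pd 1 (pd 1 g) q" "hessian g q $ 1 $ 2 = pd 1 (pd 2 g) q"
   "hessian g q $ 2 $ 1 = pd 2 (pd 1 g) q" "hessian g q $ 2 $ 2 = pd 2 (pd 2 g) q"
  by (simp_all add: hessian_def)

lemma hessA: "hessian (fR_W A_half_inf) (x,y) $ 1 $ 1 = 4 * sRd (4*x)"
  "hessian (fR_W A_half_inf) (x,y) $ 1 $ 2 = 0" "hessian (fR_W A_half_inf) (x,y) $ 2 $ 1 = 0"
  "hessian (fR_W A_half_inf) (x,y) $ 2 $ 2 = -2"
proof -
  show "hessian (fR_W A_half_inf) (x,y) $ 1 $ 1 = 4 * sRd (4*x)"
    unfolding hess_entries pd1A using sR4_deriv[of x] by (simp add: pd_def DERIV_imp_deriv)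
  show "hessian (fR_W A_half_inf) (x,y) $ 1 $ 2 = 0"
    by (simp add: hess_entries pd2A pd_def)
  show "hessian (fR_W A_half_inf) (x,y) $ 2 $ 1 = 0"
    unfolding hess_entries pd1A by (simp add: pd_def)
  have "((\<lambda>t. - 2 * t) has_real_derivative -2) (at y)" by (auto intro!: derivative_eq_intros)
  thus "hessian (fR_W A_half_inf) (x,y) $ 2 $ 2 = -2"
    by (simp add: hess_entries pd2A pd_def DERIV_imp_deriv)
qed

lemma hessD: "hessian (fR_W D_half_inf) (x,y) $ 1 $ 1 = 4 * sRd (4*x)"
  "hessian (fR_W D_half_inf) (x,y) $ 1 $ 2 = -2 * y" "hessian (fR_W D_half_inf) (x,y) $ 2 $ 1 = -2 * y"
  "hessian (fR_W D_half_inf) (x,y) $ 2 $ 2 = -2 * x"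
proof -
  have "((\<lambda>t. sR (4*t) - y\<^sup>2) has_real_derivative 4 * sRd (4*x) - 0) (at x)"
    by (intro DERIV_diff sR4_deriv DERIV_const)
  thus "hessian (fR_W D_half_inf) (x,y) $ 1 $ 1 = 4 * sRd (4*x)"
    unfolding hess_entries pd1D by (simp add: pd_def DERIV_imp_deriv)
  have "((\<lambda>t. - 2 * t * y) has_real_derivative -2 * y) (at x)" by (auto intro!: derivative_eq_intros)
  thus "hessian (fR_W D_half_inf) (x,y) $ 1 $ 2 = -2 * y"
    by (simp add: hess_entries pd2D pd_def DERIV_imp_deriv)
  have "((\<lambda>t. sR (4*x) - t\<^sup>2) has_real_derivative -2 * y) (at y)" by (auto intro!: derivative_eq_intros)
  thus "hessian (fR_W D_half_inf) (x,y) $ 2 $ 1 = -2 * y"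
    unfolding hess_entries pd1D by (simp add: pd_def DERIV_imp_deriv)
  have "((\<lambda>t. - 2 * x * t) has_real_derivative -2 * x) (at y)" by (auto intro!: derivative_eq_intros)
  thus "hessian (fR_W D_half_inf) (x,y) $ 2 $ 2 = -2 * x"
    by (simp add: hess_entries pd2D pd_def DERIV_imp_deriv)
qed

lemma quad2: "v \<bullet> (H *v v) = H$1$1 * (v$1)\<^sup>2 + (H$1$2 + H$2$1) * v$1 * v$2 + H$2$2 * (v$2)\<^sup>2"
  for H :: "real^2^2"
  by (simp add: inner_vec_def matrix_vector_mult_def sum_2 algebra_simps power2_eq_square)

lemma indef2: fixes H :: "real^2^2" assumes "H$1$2 = H$2$1" "det H < 0" shows "indefinite H"
proof -
  define a where "a = H$1$1"
  define b where "b = H$1$2"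
  define d where "d = H$2$2"
  have dt: "a * d - b * b < 0" using assms by (simp add: det_2 a_def b_def d_def)
  have q: "v \<bullet> (H *v v) = a * (v$1)\<^sup>2 + 2 * b * v$1 * v$2 + d * (v$2)\<^sup>2" for v
    using assms(1) by (simp add: quad2 a_def b_def d_def)
  have e1: "(vector [1, 0] :: real^2) \<bullet> (H *v vector [1,0]) = a" by (simp add: q)
  have e2: "(vector [-b, a] :: real^2) \<bullet> (H *v vector [-b,a]) = a * (a * d - b * b)"
    by (simp add: q power2_eq_square algebra_simps)
  show ?thesis
  proof (cases "a = 0")
    case True
    hence b: "b \<noteq> 0" using dt by auto
    have "(vector [(1-d)/(2*b), 1] :: real^2) \<bullet> (H *v vector [(1-d)/(2*b), 1]) = 1"
      using True b by (simp add: q field_simps)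
    moreover have "(vector [(-1-d)/(2*b), 1] :: real^2) \<bullet> (H *v vector [(-1-d)/(2*b), 1]) = -1"
      using True b by (simp add: q field_simps)
    ultimately show ?thesis unfolding indefinite_def
      by (metis zero_less_one neg_less_0_iff_less)
  next
    case False
    show ?thesis unfolding indefinite_def
    proof (cases "a > 0")
      case True
      thus "(\<exists>v. 0 < v \<bullet> (H *v v)) \<and> (\<exists>w. w \<bullet> (H *v w) < 0)"
        using e1 e2 dt by (metis mult_pos_neg)
    next
      case False
      hence "a < 0" using \<open>a \<noteq> 0\<close> by auto
      thus "(\<exists>v. 0 < v \<bullet> (H *v v)) \<and> (\<exists>w. w \<bullet> (H *v w) < 0)"
        using e1 e2 dt by (metis mult_neg_neg)
    qed
  qed
qed

lemma negdef2: fixes H :: "real^2^2"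
  assumes "H$1$2 = 0" "H$2$1 = 0" "H$1$1 < 0" "H$2$2 < 0" shows "neg_definite H"
  unfolding neg_definite_def
proof (intro allI impI)
  fix v :: "real^2" assume "v \<noteq> 0"
  hence "v$1 \<noteq> 0 \<or> v$2 \<noteq> 0" by (auto simp: vec_eq_iff forall_2)
  hence "H$1$1 * (v$1)\<^sup>2 + H$2$2 * (v$2)\<^sup>2 < 0"
    using assms(3,4)
    by (smt (verit) mult_neg_pos mult_nonpos_nonneg zero_le_power2 zero_less_power2)
  thus "v \<bullet> (H *v v) < 0" using assms by (simp add: quad2)
qed

lemma gR_der2: "((\<lambda>q::real\<times>real. gR (fst q)) has_derivative (\<lambda>h. sR (4 * fst p) * fst h)) (at p)"
proof -
  have "((\<lambda>q::real\<times>real. gR (fst q)) has_derivative (\<lambda>h. (*) (sR (4 * fst p)) (fst h))) (at p)"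
    by (rule has_derivative_compose[OF has_derivative_fst[OF has_derivative_ident]])
       (use gR_deriv[of "fst p"] in \<open>simp add: has_field_derivative_def\<close>)
  thus ?thesis by simp
qed

lemma fst_derR: "((\<lambda>q::real\<times>real. fst q) has_derivative (\<lambda>h. fst h)) (at p)"
  by (auto intro: has_derivative_fst[OF has_derivative_ident, simplified])
lemma snd_derR: "((\<lambda>q::real\<times>real. snd q) has_derivative (\<lambda>h. snd h)) (at p)"
  by (auto intro: has_derivative_snd[OF has_derivative_ident, simplified])

lemma fRA_der: "(fR_W A_half_inf has_derivative (\<lambda>h. sR (4 * fst p) * fst h - 2 * snd p * snd h)) (at p)"
proof -
  have "((\<lambda>q. gR (fst q) - snd q * snd q) has_derivative (\<lambda>h. sR (4 * fst p) * fst h - (snd p * snd h + snd h * snd p))) (at p)"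
    by (intro has_derivative_diff gR_der2 has_derivative_mult snd_derR)
  hence "((\<lambda>q. gR (fst q) - snd q * snd q) has_derivative (\<lambda>h. sR (4 * fst p) * fst h - 2 * snd p * snd h)) (at p)"
    by (rule has_derivative_eq_rhs) (simp add: fun_eq_iff algebra_simps)
  thus ?thesis by (simp add: fR_A power2_eq_square)
qed

lemma fRD_der: "(fR_W D_half_inf has_derivative (\<lambda>h. (sR (4 * fst p) - (snd p)\<^sup>2) * fst h - 2 * fst p * snd p * snd h)) (at p)"
proof -
  have "((\<lambda>q. gR (fst q) - fst q * (snd q * snd q)) has_derivative (\<lambda>h. sR (4 * fst p) * fst h - (fst p * (snd p * snd h + snd h * snd p) + fst h * (snd p * snd p)))) (at p)"
    by (intro has_derivative_diff gR_der2 has_derivative_mult snd_derR fst_derR)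
  hence "((\<lambda>q. gR (fst q) - fst q * (snd q * snd q)) has_derivative (\<lambda>h. (sR (4 * fst p) - (snd p)\<^sup>2) * fst h - 2 * fst p * snd p * snd h)) (at p)"
    by (rule has_derivative_eq_rhs) (simp add: fun_eq_iff algebra_simps power2_eq_square)
  thus ?thesis by (simp add: fR_D power2_eq_square)
qed


lemma graph_branch:
  fixes \<phi> \<phi>' :: "real \<Rightarrow> real"
  assumes e: "e > 0" and c: "c > 0"
    and d: "\<And>x. x \<in> {x0 - c*e <..< x0 + c*e} \<Longrightarrow> (\<phi> has_real_derivative \<phi>' x) (at x)"
    and cont: "continuous_on {x0 - c*e <..< x0 + c*e} \<phi>'"
  shows "branch (\<lambda>t. (x0 + c*t, \<phi> (x0 + c*t))) e (x0, \<phi> x0)"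
    and "vector_derivative (\<lambda>t. (x0 + c*t, \<phi> (x0 + c*t))) (at 0) = (c, c * \<phi>' x0)"
proof -
  let ?g = "\<lambda>t. (x0 + c*t, \<phi> (x0 + c*t))"
  have mem: "x0 + c*t \<in> {x0 - c*e <..< x0 + c*e}" if "t \<in> {-e<..<e}" for t
    using that c mult_strict_left_mono[of "-e" t c] mult_strict_left_mono[of t e c] by auto
  have vd: "(?g has_vector_derivative (c, c * \<phi>' (x0 + c*t))) (at t)" if "t \<in> {-e<..<e}" for t
  proof -
    have l: "((\<lambda>t. x0 + c*t) has_real_derivative c) (at t)" by (auto intro!: derivative_eq_intros)
    have "((\<lambda>t. \<phi> (x0 + c*t)) has_real_derivative \<phi>' (x0 + c*t) * c) (at t)"
      by (rule DERIV_chain2[OF d[OF mem[OF that]] l])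
    hence p2: "((\<lambda>t. \<phi> (x0 + c*t)) has_vector_derivative c * \<phi>' (x0 + c*t)) (at t)"
      by (simp add: has_real_derivative_iff_has_vector_derivative mult.commute)
    have p1: "((\<lambda>t. x0 + c*t) has_vector_derivative c) (at t)"
      using l by (simp add: has_real_derivative_iff_has_vector_derivative)
    show ?thesis by (rule has_vector_derivative_Pair[OF p1 p2])
  qed
  have cD: "continuous_on {-e<..<e} (\<lambda>t. (c, c * \<phi>' (x0 + c*t)))"
  proof -
    have "continuous_on {-e<..<e} (\<lambda>t. \<phi>' (x0 + c*t))"
      by (rule continuous_on_compose2[OF cont]) (use mem in \<open>auto intro!: continuous_intros\<close>)
    thus ?thesis by (intro continuous_intros)
  qed
  have "?g C1_differentiable_on {-e<..<e}"
    unfolding C1_differentiable_on_def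
    by (intro exI[of _ "\<lambda>t. (c, c * \<phi>' (x0 + c*t))"] conjI ballI vd cD)
  moreover have "inj_on ?g {-e<..<e}" using c by (auto simp: inj_on_def)
  moreover have "\<forall>t\<in>{-e<..<e}. vector_derivative ?g (at t) \<noteq> 0"
    using vector_derivative_at[OF vd] c by (auto simp: zero_prod_def)
  ultimately show "branch ?g e (x0, \<phi> x0)" using e by (simp add: branch_def)
  show "vector_derivative ?g (at 0) = (c, c * \<phi>' x0)"
    using vector_derivative_at[OF vd[of 0]] e by simp
qed

lemma vert_branch:
  assumes e: "e > 0"
  shows "branch (\<lambda>t. (x0, y0 + t)) e (x0, y0)"
    and "vector_derivative (\<lambda>t. (x0, y0 + t)) (at 0) = (0, 1)"
proof -
  let ?g = "\<lambda>t::real. (x0, y0 + t)"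
  have vd: "(?g has_vector_derivative (0, 1)) (at t)" for t
    by (auto intro!: derivative_eq_intros)
  have "?g C1_differentiable_on {-e<..<e}"
    unfolding C1_differentiable_on_def
    by (intro exI[of _ "\<lambda>_. (0,1)"] conjI ballI vd continuous_on_const)
  moreover have "inj_on ?g {-e<..<e}" by (auto simp: inj_on_def)
  moreover have "\<forall>t\<in>{-e<..<e}. vector_derivative ?g (at t) \<noteq> 0"
    using vector_derivative_at[OF vd] by (auto simp: zero_prod_def)
  ultimately show "branch ?g e (x0, y0)" using e by (simp add: branch_def)
  show "vector_derivative ?g (at 0) = (0, 1)"
    using vector_derivative_at[OF vd[of 0]] by simp
qed

lemma branch_grad:
  assumes br: "branch \<gamma> e p" and img: "\<gamma> ` {-e<..<e} \<subseteq> {q. F q = 0}"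
    and F: "(F has_derivative (\<lambda>h. a * fst h + b * snd h)) (at p)"
  shows "a * fst (vector_derivative \<gamma> (at 0)) + b * snd (vector_derivative \<gamma> (at 0)) = 0"
proof -
  let ?v = "vector_derivative \<gamma> (at 0)"
  from br have e: "e > 0" and c1: "\<gamma> C1_differentiable_on {-e<..<e}" and g0: "\<gamma> 0 = p"
    by (auto simp: branch_def)
  from c1 obtain D where D: "\<And>x. x\<in>{-e<..<e} \<Longrightarrow> (\<gamma> has_vector_derivative D x) (at x)"
    unfolding C1_differentiable_on_def by blast
  have "0 \<in> {-e<..<e}" using e by simp
  hence gv: "(\<gamma> has_vector_derivative ?v) (at 0)"
    using D vector_derivative_at by metis
  hence gd: "(\<gamma> has_derivative (\<lambda>t. t *\<^sub>R ?v)) (at 0)" by (simp add: has_vector_derivative_def)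
  have F0: "(F has_derivative (\<lambda>h. a * fst h + b * snd h)) (at (\<gamma> 0))" using F g0 by simp
  have "((\<lambda>t. F (\<gamma> t)) has_derivative (\<lambda>x. (\<lambda>h. a * fst h + b * snd h) ((\<lambda>t. t *\<^sub>R ?v) x))) (at 0)"
    by (rule has_derivative_compose[OF gd F0])
  hence "((\<lambda>t. F (\<gamma> t)) has_derivative (\<lambda>x. (a * fst ?v + b * snd ?v) * x)) (at 0)"
    by (rule has_derivative_eq_rhs) (simp add: fun_eq_iff algebra_simps)
  hence h1: "((\<lambda>t. F (\<gamma> t)) has_real_derivative (a * fst ?v + b * snd ?v)) (at 0)"
    by (simp add: has_field_derivative_def)
  have eq0: "(\<lambda>t::real. 0::real) x = F (\<gamma> x)" if "x \<in> {-e<..<e}" for x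
  proof -
    have "\<gamma> x \<in> \<gamma> ` {-e<..<e}" using that by (rule imageI)
    with img have "\<gamma> x \<in> {q. F q = 0}" by (rule subsetD)
    thus ?thesis by simp
  qed
  have h2: "((\<lambda>t. F (\<gamma> t)) has_real_derivative 0) (at 0)"
    by (rule has_field_derivative_transform_within_open[OF DERIV_const open_greaterThanLessThan \<open>0 \<in> {-e<..<e}\<close> eq0])
  show ?thesis using DERIV_unique[OF h1 h2] .
qed

lemma node_grad:
  assumes node: "is_node X p" and X: "X = {q. F q = 0}"
    and F: "(F has_derivative (\<lambda>h. a * fst h + b * snd h)) (at p)"
  shows "a = 0 \<and> b = 0"
proof -
  obtain U e \<gamma>1 \<gamma>2 where H: "open U \<and> p \<in> U \<and> branch \<gamma>1 e p \<and> branch \<gamma>2 e p \<and>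
     \<gamma>1 ` {-e<..<e} \<subseteq> U \<and> \<gamma>2 ` {-e<..<e} \<subseteq> U \<and>
     X \<inter> U = \<gamma>1 ` {-e<..<e} \<union> \<gamma>2 ` {-e<..<e} \<and>
     (let v = vector_derivative \<gamma>1 (at 0); w = vector_derivative \<gamma>2 (at 0)
      in fst v * snd w - snd v * fst w \<noteq> 0)"
    apply (insert conjunct2[OF node[unfolded is_node_def]])
    apply (elim exE)
    apply (rule that)
    apply assumption
    done
  have b1: "branch \<gamma>1 e p" using H by (elim conjE) assumption
  have b2: "branch \<gamma>2 e p" using H by (elim conjE) assumption
  have XU: "X \<inter> U = \<gamma>1 ` {-e<..<e} \<union> \<gamma>2 ` {-e<..<e}" using H by (elim conjE) assumption
  have tr: "fst (vector_derivative \<gamma>1 (at 0)) * snd (vector_derivative \<gamma>2 (at 0)) -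
         snd (vector_derivative \<gamma>1 (at 0)) * fst (vector_derivative \<gamma>2 (at 0)) \<noteq> 0"
    using H unfolding Let_def by (elim conjE) assumption
  have "\<gamma>1 ` {-e<..<e} \<subseteq> X \<inter> U" unfolding XU by (rule Un_upper1)
  hence s1: "\<gamma>1 ` {-e<..<e} \<subseteq> {q. F q = 0}" unfolding X by (rule subset_trans) (rule Int_lower1)
  have "\<gamma>2 ` {-e<..<e} \<subseteq> X \<inter> U" unfolding XU by (rule Un_upper2)
  hence s2: "\<gamma>2 ` {-e<..<e} \<subseteq> {q. F q = 0}" unfolding X by (rule subset_trans) (rule Int_lower1)
  define v1 where "v1 = fst (vector_derivative \<gamma>1 (at 0))"
  define v2 where "v2 = snd (vector_derivative \<gamma>1 (at 0))"
  define w1 where "w1 = fst (vector_derivative \<gamma>2 (at 0))"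
  define w2 where "w2 = snd (vector_derivative \<gamma>2 (at 0))"
  have e1: "a * v1 + b * v2 = 0" using branch_grad[OF b1 s1 F] by (simp add: v1_def v2_def)
  have e2: "a * w1 + b * w2 = 0" using branch_grad[OF b2 s2 F] by (simp add: w1_def w2_def)
  have d: "v1 * w2 - v2 * w1 \<noteq> 0" using tr by (simp add: v1_def v2_def w1_def w2_def)
  have "a * (v1 * w2 - v2 * w1) = (a * v1 + b * v2) * w2 - (a * w1 + b * w2) * v2"
    by (simp add: algebra_simps)
  hence "a = 0" using e1 e2 d by simp
  moreover have "b * (v1 * w2 - v2 * w1) = (a * w1 + b * w2) * v1 - (a * v1 + b * v2) * w1"
    by (simp add: algebra_simps)
  hence "b = 0" using e1 e2 d by simp
  ultimately show ?thesis by simp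
qed


lemma f_realpt_fR: "f_W W (realpt q) = of_real (fR_W W q)"
  by (cases q; cases W) (simp_all add: fR_W_def f_realpt)

lemma XR_eq: "XR_W W = {q. fR_W W q = 0}"
  by (auto simp: XR_W_def f_realpt_fR)

lemma fRA_pt: "fR_W A_half_inf (x,y) = gR x - y\<^sup>2" by (simp add: fR_A)
lemma fRD_pt: "fR_W D_half_inf (x,y) = gR x - x * y\<^sup>2" by (simp add: fR_D)

lemma gR_sq: "0 \<le> x \<Longrightarrow> gR x = (sqrt x * sR x)\<^sup>2"
  by (simp add: gR_def power_mult_distrib)

lemma sq_eq_cases: "(y::real)\<^sup>2 = z\<^sup>2 \<longleftrightarrow> y = z \<or> y = - z"
  by (metis power2_eq_iff)

lemma open_strip: "open ({a<..<b} \<times> (UNIV::real set))" for a b :: real by (intro open_Times open_greaterThanLessThan open_UNIV)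

lemma node_axis:
  fixes \<phi> \<phi>' :: "real \<Rightarrow> real"
  assumes x0: "x0 > 0" and phi0: "\<phi> x0 = 0"
    and d: "\<And>x. x > 0 \<Longrightarrow> (\<phi> has_real_derivative \<phi>' x) (at x)"
    and cont: "continuous_on {0<..} \<phi>'"
    and nz: "\<phi>' x0 \<noteq> 0"
    and X: "\<And>x y. x > 0 \<Longrightarrow> (x,y) \<in> X \<longleftrightarrow> y\<^sup>2 = (\<phi> x)\<^sup>2"
  shows "is_node X (x0, 0)"
proof -
  define e where "e = x0 / 2"
  have e: "e > 0" using x0 by (simp add: e_def)
  have int: "{x0 - 1*e<..<x0 + 1*e} \<subseteq> {0<..}" using x0 by (auto simp: e_def)
  have d1: "(\<phi> has_real_derivative \<phi>' x) (at x)" if "x \<in> {x0 - 1*e<..<x0 + 1*e}" for x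
    using d int that by auto
  have d2: "((\<lambda>x. - \<phi> x) has_real_derivative - \<phi>' x) (at x)" if "x \<in> {x0 - 1*e<..<x0 + 1*e}" for x
    using DERIV_minus[OF d1[OF that]] .
  have c1: "continuous_on {x0 - 1*e<..<x0 + 1*e} \<phi>'" using continuous_on_subset[OF cont int] .
  have c2: "continuous_on {x0 - 1*e<..<x0 + 1*e} (\<lambda>x. - \<phi>' x)" using c1 by (intro continuous_intros)
  note g1 = graph_branch[OF e zero_less_one d1 c1]
  note g2 = graph_branch[OF e zero_less_one d2 c2]
  define \<gamma>1 where "\<gamma>1 = (\<lambda>t. (x0 + 1*t, \<phi> (x0 + 1*t)))"
  define \<gamma>2 where "\<gamma>2 = (\<lambda>t. (x0 + 1*t, - \<phi> (x0 + 1*t)))"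
  define U where "U = {x0 - e<..<x0 + e} \<times> (UNIV::real set)"
  have b1: "branch \<gamma>1 e (x0, 0)" using g1(1) phi0 by (simp add: \<gamma>1_def)
  have b2: "branch \<gamma>2 e (x0, 0)" using g2(1) phi0 by (simp add: \<gamma>2_def)
  have v1: "vector_derivative \<gamma>1 (at 0) = (1, \<phi>' x0)" using g1(2) by (simp add: \<gamma>1_def)
  have v2: "vector_derivative \<gamma>2 (at 0) = (1, - \<phi>' x0)" using g2(2) by (simp add: \<gamma>2_def)
  have i1: "\<gamma>1 ` {-e<..<e} \<subseteq> U" by (auto simp: \<gamma>1_def U_def)
  have i2: "\<gamma>2 ` {-e<..<e} \<subseteq> U" by (auto simp: \<gamma>2_def U_def)
  have XU: "X \<inter> U = \<gamma>1 ` {-e<..<e} \<union> \<gamma>2 ` {-e<..<e}"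
  proof (intro equalityI subsetI)
    fix q assume q: "q \<in> X \<inter> U"
    obtain x y where xy: "q = (x,y)" by (cases q)
    have xi: "x0 - e < x" "x < x0 + e" using q xy by (auto simp: U_def)
    hence xpos: "x > 0" using x0 by (simp add: e_def)
    have "y\<^sup>2 = (\<phi> x)\<^sup>2" using q xy X[OF xpos] by auto
    hence "y = \<phi> x \<or> y = - \<phi> x" by (simp add: sq_eq_cases)
    moreover have "x - x0 \<in> {-e<..<e}" using xi by auto
    ultimately show "q \<in> \<gamma>1 ` {-e<..<e} \<union> \<gamma>2 ` {-e<..<e}"
      unfolding xy \<gamma>1_def \<gamma>2_def
      by (auto intro!: image_eqI[where x="x - x0"])
  next
    fix q assume "q \<in> \<gamma>1 ` {-e<..<e} \<union> \<gamma>2 ` {-e<..<e}"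
    then obtain t where t: "t \<in> {-e<..<e}" and q: "q = \<gamma>1 t \<or> q = \<gamma>2 t" by auto
    have pos: "x0 + 1*t > 0" using t x0 by (auto simp: e_def)
    show "q \<in> X \<inter> U" using q i1 i2 t X[OF pos] by (auto simp: \<gamma>1_def \<gamma>2_def)
  qed
  have "open U" unfolding U_def by (rule open_strip)
  moreover have "(x0, 0) \<in> U" using e by (simp add: U_def)
  moreover have "(x0, 0) \<in> X" using X[OF x0] phi0 by simp
  moreover have "fst (vector_derivative \<gamma>1 (at 0)) * snd (vector_derivative \<gamma>2 (at 0)) -
         snd (vector_derivative \<gamma>1 (at 0)) * fst (vector_derivative \<gamma>2 (at 0)) \<noteq> 0"
    using nz by (simp add: v1 v2)
  ultimately show ?thesis unfolding is_node_def Let_def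
    using b1 b2 i1 i2 XU by blast
qed

lemma node_vert:
  fixes \<sigma> :: real
  assumes \<sigma>: "\<sigma> = 1 \<or> \<sigma> = -1"
  shows "is_node (XR_W D_half_inf) (0, \<sigma>)"
proof -
  have "isCont sR 0" using sR_cont by (simp add: continuous_on_eq_continuous_at)
  then obtain \<delta> where \<delta>: "\<delta> > 0" and dl: "\<And>x. dist x 0 < \<delta> \<Longrightarrow> dist (sR x) (sR 0) < 1/2"
    unfolding continuous_at_eps_delta by (metis zero_less_divide_1_iff zero_less_numeral)
  have sRb: "\<bar>sR x - 1\<bar> < 1/2" if "\<bar>x\<bar> < \<delta>" for x
    using dl[of x] that by (simp add: dist_real_def)
  define e :: real where "e = 1/2"
  have e: "e > 0" by (simp add: e_def)
  have d1: "((\<lambda>x. \<sigma> * sR x) has_real_derivative \<sigma> * sRd x) (at x)" for x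
    by (rule DERIV_cmult[OF sR_deriv])
  have c1: "continuous_on {0 - \<delta>*e<..<0 + \<delta>*e} (\<lambda>x. \<sigma> * sRd x)"
    by (intro continuous_intros continuous_on_subset[OF sRd_cont]) auto
  note g2 = graph_branch[OF e \<delta> d1 c1]
  note g1 = vert_branch[OF e, of 0 \<sigma>]
  define \<gamma>1 where "\<gamma>1 = (\<lambda>t. (0::real, \<sigma> + t))"
  define \<gamma>2 where "\<gamma>2 = (\<lambda>t. (0 + \<delta>*t, \<sigma> * sR (0 + \<delta>*t)))"
  define U where "U = {-\<delta>*e<..<\<delta>*e} \<times> {\<sigma> - e<..<\<sigma> + e}"
  have b1: "branch \<gamma>1 e (0, \<sigma>)" using g1(1) by (simp add: \<gamma>1_def)
  have b2: "branch \<gamma>2 e (0, \<sigma>)" using g2(1) by (simp add: \<gamma>2_def)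
  have v1: "vector_derivative \<gamma>1 (at 0) = (0, 1)" using g1(2) by (simp add: \<gamma>1_def)
  have v2: "vector_derivative \<gamma>2 (at 0) = (\<delta>, \<delta> * (\<sigma> * sRd 0))" using g2(2) by (simp add: \<gamma>2_def)
  have X: "(x,y) \<in> XR_W D_half_inf \<longleftrightarrow> x * ((sR x)\<^sup>2 - y\<^sup>2) = 0" for x y
    by (simp add: XR_eq fRD_pt gR_def algebra_simps)
  have sig2: "\<sigma>\<^sup>2 = 1" using \<sigma> by auto
  have i1: "\<gamma>1 ` {-e<..<e} \<subseteq> U" by (auto simp: \<gamma>1_def U_def \<delta>)
  have i2: "\<gamma>2 t \<in> U \<and> \<gamma>2 t \<in> XR_W D_half_inf" if t: "t \<in> {-e<..<e}" for t
  proof -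
    have a: "\<bar>\<delta>*t\<bar> < \<delta>*e" using t \<delta> by (auto simp: abs_mult abs_less_iff)
    hence "\<bar>\<delta>*t\<bar> < \<delta>" using \<delta> by (simp add: e_def)
    hence "\<bar>sR (\<delta>*t) - 1\<bar> < 1/2" by (rule sRb)
    hence "\<bar>\<sigma> * sR (\<delta>*t) - \<sigma>\<bar> < e" using \<sigma> by (auto simp: e_def abs_minus_commute)
    thus ?thesis using a by (auto simp: \<gamma>2_def U_def X power_mult_distrib sig2 abs_less_iff)
  qed
  have XU: "XR_W D_half_inf \<inter> U = \<gamma>1 ` {-e<..<e} \<union> \<gamma>2 ` {-e<..<e}"
  proof (intro equalityI subsetI)
    fix q assume q: "q \<in> XR_W D_half_inf \<inter> U"
    obtain x y where xy: "q = (x,y)" by (cases q)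
    have xi: "\<bar>x\<bar> < \<delta>*e" and yi: "\<bar>y - \<sigma>\<bar> < e" using q xy by (auto simp: U_def abs_less_iff)
    have eq: "x * ((sR x)\<^sup>2 - y\<^sup>2) = 0" using q xy X by auto
    show "q \<in> \<gamma>1 ` {-e<..<e} \<union> \<gamma>2 ` {-e<..<e}"
    proof (cases "x = 0")
      case True
      have "y - \<sigma> \<in> {-e<..<e}" using yi by (auto simp: abs_less_iff)
      thus ?thesis unfolding xy True \<gamma>1_def by (auto intro!: image_eqI[where x="y - \<sigma>"])
    next
      case False
      hence "(sR x)\<^sup>2 = y\<^sup>2" using eq by simp
      hence yy: "y = sR x \<or> y = - sR x" by (metis sq_eq_cases)
      have "\<bar>x\<bar> < \<delta>" using xi \<delta> by (simp add: e_def)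
      hence sb: "\<bar>sR x - 1\<bar> < 1/2" by (rule sRb)
      have s1: "1/2 < sR x" using sb abs_less_iff[of "sR x - 1" "1/2"] by linarith
      have y1: "\<sigma> - 1/2 < y" "y < \<sigma> + 1/2" using yi abs_less_iff[of "y - \<sigma>" "1/2"] unfolding e_def by linarith+
      have "y = \<sigma> * sR x"
      proof (cases "\<sigma> = 1")
        case True thus ?thesis using yy s1 y1 by auto
      next
        case False hence "\<sigma> = -1" using \<sigma> by simp
        thus ?thesis using yy s1 y1 by auto
      qed
      moreover have "x / \<delta> \<in> {-e<..<e}" using xi \<delta> by (auto simp: abs_less_iff field_simps)
      ultimately show ?thesis unfolding xy \<gamma>2_def using \<delta>
        by (auto intro!: image_eqI[where x="x / \<delta>"])
    qed
  next
    fix q assume "q \<in> \<gamma>1 ` {-e<..<e} \<union> \<gamma>2 ` {-e<..<e}"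
    then obtain t where t: "t \<in> {-e<..<e}" and q: "q = \<gamma>1 t \<or> q = \<gamma>2 t" by auto
    show "q \<in> XR_W D_half_inf \<inter> U"
      using q i1 t i2[OF t] by (auto simp: \<gamma>1_def X)
  qed
  have "open U" unfolding U_def by (intro open_Times open_greaterThanLessThan)
  moreover have "(0, \<sigma>) \<in> U" using e \<delta> by (simp add: U_def)
  moreover have "(0, \<sigma>) \<in> XR_W D_half_inf" by (simp add: X)
  moreover have "fst (vector_derivative \<gamma>1 (at 0)) * snd (vector_derivative \<gamma>2 (at 0)) -
         snd (vector_derivative \<gamma>1 (at 0)) * fst (vector_derivative \<gamma>2 (at 0)) \<noteq> 0"
    using \<delta> by (simp add: v1 v2)
  ultimately show ?thesis unfolding is_node_def Let_def
    using b1 b2 i1 i2 XU by blast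
qed

lemma node_A_axis: assumes k: "k \<ge> (1::nat)" shows "is_node (XR_W A_half_inf) ((real k * pi)\<^sup>2, 0)"
proof -
  define x0 where "x0 = (real k * pi)\<^sup>2"
  have x0: "x0 > 0" using k by (simp add: x0_def)
  have sq: "sqrt x0 = real k * pi" using k by (simp add: x0_def)
  show ?thesis unfolding x0_def[symmetric]
  proof (rule node_axis[where \<phi>="\<lambda>x. sqrt x * sR x" and \<phi>'="\<lambda>x. inverse (sqrt x) / 2 * sR x + sRd x * sqrt x"])
    show "0 < x0" by (rule x0)
    show "sqrt x0 * sR x0 = 0" using k by (simp add: x0_def sR_sq)
    show "((\<lambda>x. sqrt x * sR x) has_real_derivative inverse (sqrt x) / 2 * sR x + sRd x * sqrt x) (at x)"
      if "x > 0" for x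
      by (rule DERIV_mult[OF DERIV_real_sqrt[OF that] sR_deriv])
    have "continuous_on {0<..} (\<lambda>x. inverse (sqrt x) / 2 * sR x + sRd x * sqrt x)"
      by (intro continuous_intros continuous_on_subset[OF sR_cont] continuous_on_subset[OF sRd_cont]) auto
    thus "continuous_on {0<..} (\<lambda>x. inverse (sqrt x) / 2 * sR x + sRd x * sqrt x)" .
    have "sRd x0 \<noteq> 0" using k sRd_sq[of k] by (simp add: x0_def)
    thus "inverse (sqrt x0) / 2 * sR x0 + sRd x0 * sqrt x0 \<noteq> 0"
      using k by (simp add: x0_def sR_sq)
    show "(x, y) \<in> XR_W A_half_inf \<longleftrightarrow> y\<^sup>2 = (sqrt x * sR x)\<^sup>2" if "x > 0" for x y
      using that by (auto simp: XR_eq fRA_pt gR_sq)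
  qed
qed

lemma node_D_axis: assumes k: "k \<ge> (1::nat)" shows "is_node (XR_W D_half_inf) ((real k * pi)\<^sup>2, 0)"
proof -
  define x0 where "x0 = (real k * pi)\<^sup>2"
  have x0: "x0 > 0" using k by (simp add: x0_def)
  show ?thesis unfolding x0_def[symmetric]
  proof (rule node_axis[where \<phi>="sR" and \<phi>'="sRd"])
    show "0 < x0" by (rule x0)
    show "sR x0 = 0" using k by (simp add: x0_def sR_sq)
    show "(sR has_real_derivative sRd x) (at x)" for x by (rule sR_deriv)
    show "continuous_on {0<..} sRd" using continuous_on_subset[OF sRd_cont] by blast
    show "sRd x0 \<noteq> 0" using k sRd_sq[of k] by (simp add: x0_def)
    show "(x, y) \<in> XR_W D_half_inf \<longleftrightarrow> y\<^sup>2 = (sR x)\<^sup>2" if "x > 0" for x y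
    proof -
      have "(x, y) \<in> XR_W D_half_inf \<longleftrightarrow> x * ((sR x)\<^sup>2 - y\<^sup>2) = 0"
        by (simp add: XR_eq fRD_pt gR_def algebra_simps)
      thus ?thesis using that by auto
    qed
  qed
qed

lemma realpt_inj: "realpt p = realpt q \<longleftrightarrow> p = q"
  by (metis Re_realpt)

definition C0R :: "W_type \<Rightarrow> (real \<times> real) set" where "C0R W = {q \<in> CritR W. fR_W W q = 0}"

lemma fR_Pt: "m \<ge> 1 \<Longrightarrow> fR_W W (Pt m) = (if even m then 0 else 1)"
  by (cases W) (simp_all add: Pt_def fRA_pt fRD_pt gR_Pt)

lemma Pt_even: "Pt (2*k) = ((real k * pi)\<^sup>2, 0)"
  by (simp add: Pt_def)

lemma nodes_sub: "is_node (XR_W W) p \<Longrightarrow> p \<in> C0R W"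
proof -
  assume node: "is_node (XR_W W) p"
  obtain x y where p: "p = (x,y)" by (cases p)
  have pX: "p \<in> XR_W W" using node by (simp add: is_node_def)
  hence f0: "fR_W W p = 0" by (simp add: XR_eq)
  have s4: "s_fun (4 * fst (realpt p)) = of_real (sR (4*x))"
    using s_real[of "4*x"] by (simp add: p realpt_def)
  have "realpt p \<in> crit_W W"
  proof (cases W)
    case A_half_inf
    have "(fR_W W has_derivative (\<lambda>h. sR (4 * x) * fst h + (- 2 * y) * snd h)) (at p)"
      using fRA_der[of p] unfolding A_half_inf p by (rule has_derivative_eq_rhs) (simp add: fun_eq_iff)
    from node_grad[OF node XR_eq this] have "sR (4*x) = 0 \<and> y = 0" by simp
    thus ?thesis unfolding A_half_inf critA using s4 by (simp add: p realpt_def)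
  next
    case D_half_inf
    have "(fR_W W has_derivative (\<lambda>h. (sR (4 * x) - y\<^sup>2) * fst h + (- 2 * x * y) * snd h)) (at p)"
      using fRD_der[of p] unfolding D_half_inf p by (rule has_derivative_eq_rhs) (simp add: fun_eq_iff)
    from node_grad[OF node XR_eq this] have "sR (4*x) = y\<^sup>2 \<and> x * y = 0" by simp
    thus ?thesis unfolding D_half_inf critD using s4 by (simp add: p realpt_def)
  qed
  hence "p \<in> CritR W" unfolding crit_eq by (metis image_iff realpt_inj)
  thus "p \<in> C0R W" using f0 by (simp add: C0R_def)
qed

lemma nodes_sup: "q \<in> C0R W \<Longrightarrow> is_node (XR_W W) q"
proof -
  assume q: "q \<in> C0R W"
  hence qc: "q \<in> CritR W" and f0: "fR_W W q = 0" by (auto simp: C0R_def)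
  show ?thesis
  proof (cases "q \<in> Pt ` {1..}")
    case True
    then obtain m where m: "m \<ge> 1" "q = Pt m" by auto
    hence "even m" using f0 fR_Pt[of m W] by (auto split: if_splits)
    then obtain k where k: "m = 2*k" by blast
    hence k1: "k \<ge> 1" using m by simp
    show ?thesis unfolding m(2) k Pt_even
      using node_A_axis[OF k1] node_D_axis[OF k1] by (cases W) auto
  next
    case False
    hence "W = D_half_inf" "q = (0,1) \<or> q = (0,-1)" using qc by (auto simp: CritR_def split: if_splits)
    thus ?thesis using node_vert by auto
  qed
qed

lemma nodes_eq: "{p. is_node (XR_W W) p} = C0R W"
  using nodes_sub nodes_sup by blast


definition qW :: "W_type \<Rightarrow> real \<Rightarrow> real" where
  "qW W x = (case W of A_half_inf \<Rightarrow> gR x | D_half_inf \<Rightarrow> (sR x)\<^sup>2)"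

lemma X_pos: "x > 0 \<Longrightarrow> (x,y) \<in> XR_W W \<longleftrightarrow> y\<^sup>2 = qW W x"
proof (cases W)
  case A_half_inf
  thus ?thesis by (auto simp: XR_eq fRA_pt qW_def)
next
  case D_half_inf
  assume x: "x > 0"
  have "(x, y) \<in> XR_W D_half_inf \<longleftrightarrow> x * ((sR x)\<^sup>2 - y\<^sup>2) = 0"
    by (simp add: XR_eq fRD_pt gR_def algebra_simps)
  thus ?thesis using x D_half_inf by (auto simp: qW_def)
qed

lemma gR_cont: "continuous_on UNIV gR"
  unfolding gR_def[abs_def] by (intro continuous_intros sR_cont)

lemma qW_cont: "continuous_on UNIV (qW W)"
  by (cases W) (simp_all add: qW_def[abs_def] gR_cont continuous_on_power sR_cont)

lemma qW_sq0: "k \<ge> (1::nat) \<Longrightarrow> qW W ((real k * pi)\<^sup>2) = 0"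
  by (cases W) (simp_all add: qW_def gR_def sR_sq)

lemma qW_nonneg: "x \<ge> 0 \<Longrightarrow> qW W x \<ge> 0"
  by (cases W) (simp_all add: qW_def gR_def)

lemma qW_le1: assumes "x > 0" shows "qW W x \<le> 1"
proof -
  have r: "sqrt x > 0" using assms by simp
  have s: "sR x = sin (sqrt x) / sqrt x" using assms by (rule sR_pos)
  have "gR x = (sin (sqrt x))\<^sup>2" using assms r by (simp add: gR_def s power_divide)
  moreover have "(sin (sqrt x))\<^sup>2 \<le> 1" by (simp add: abs_square_le_1)
  moreover have "(sR x)\<^sup>2 \<le> 1"
  proof -
    have "\<bar>sin (sqrt x)\<bar> \<le> \<bar>sqrt x\<bar>" by (rule abs_sin_x_le_abs_x)
    hence "\<bar>sR x\<bar> \<le> 1" using r by (simp add: s abs_divide divide_le_eq_1)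
    thus ?thesis by (simp add: abs_square_le_1)
  qed
  ultimately show ?thesis by (cases W) (simp_all add: qW_def)
qed

lemma sR_nz_between:
  assumes "real k * pi < sqrt x" "sqrt x < (real k + 1) * pi" "x > 0"
  shows "sR x \<noteq> 0"
proof
  assume "sR x = 0"
  hence "sin (sqrt x) = 0" using assms(3) by (simp add: sR_pos)
  then obtain i :: int where i: "sqrt x = of_int i * pi" using sin_zero_iff_int2 by blast
  have "real k < of_int i" "of_int i < real k + 1" using assms(1,2) i by auto
  hence "of_int (int k) < (of_int i :: real)" "(of_int i :: real) < of_int (int k + 1)" by simp_all
  hence "int k < i" "i < int k + 1" by (simp_all only: of_int_less_iff)
  thus False by linarith
qed

lemma qW_pos_between:
  assumes "real k * pi < sqrt x" "sqrt x < (real k + 1) * pi" "x > 0"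
  shows "qW W x > 0"
  using sR_nz_between[OF assms] assms(3) by (cases W) (simp_all add: qW_def gR_def)

lemma sR_nonpos_nz: assumes "z \<le> 0" shows "sR z \<noteq> 0"
proof
  assume "sR z = 0"
  hence "s_fun (of_real z) = 0" by (simp add: s_real)
  then obtain n :: int where n: "n \<noteq> 0" "of_real z = (of_real (of_int n * pi) :: complex)\<^sup>2"
    using s_zero_iff by blast
  hence "z = (of_int n * pi)\<^sup>2" by (metis of_real_eq_iff of_real_power)
  moreover have "(of_int n * pi)\<^sup>2 > 0" using n(1) by simp
  ultimately show False using assms by simp
qed

lemma sq_bounds:
  fixes x :: real
  shows "((real k * pi)\<^sup>2 < x \<and> x < ((real k + 1) * pi)\<^sup>2) \<longleftrightarrow>
         (0 < x \<and> real k * pi < sqrt x \<and> sqrt x < (real k + 1) * pi)"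
proof
  assume h: "(real k * pi)\<^sup>2 < x \<and> x < ((real k + 1) * pi)\<^sup>2"
  hence x: "0 < x" by (smt (verit) zero_le_power2)
  have "sqrt ((real k * pi)\<^sup>2) < sqrt x" using h real_sqrt_less_mono by blast
  moreover have "sqrt x < sqrt (((real k + 1) * pi)\<^sup>2)" using h real_sqrt_less_mono by blast
  ultimately show "0 < x \<and> real k * pi < sqrt x \<and> sqrt x < (real k + 1) * pi"
    using x by simp
next
  assume h: "0 < x \<and> real k * pi < sqrt x \<and> sqrt x < (real k + 1) * pi"
  have k0: "0 \<le> real k * pi" by simp
  have "(real k * pi)\<^sup>2 < (sqrt x)\<^sup>2" using h k0 by (intro power_strict_mono) auto
  moreover have "(sqrt x)\<^sup>2 < ((real k + 1) * pi)\<^sup>2" using h by (intro power_strict_mono) auto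
  ultimately show "(real k * pi)\<^sup>2 < x \<and> x < ((real k + 1) * pi)\<^sup>2" using h by simp
qed

definition lens :: "W_type \<Rightarrow> nat \<Rightarrow> (real \<times> real) set" where
  "lens W k = {p. (real k * pi)\<^sup>2 < fst p \<and> fst p < ((real k + 1) * pi)\<^sup>2 \<and> (snd p)\<^sup>2 < qW W (fst p)}"

lemma lens_mem: "(x,y) \<in> lens W k \<longleftrightarrow> 0 < x \<and> real k * pi < sqrt x \<and> sqrt x < (real k + 1) * pi \<and> y\<^sup>2 < qW W x"
  unfolding lens_def using sq_bounds[of k x] by auto

lemma lens_open: "open (lens W k)"
  unfolding lens_def
  by (intro open_Collect_conj open_Collect_less continuous_intros continuous_on_compose2[OF qW_cont]) auto

lemma lens_sub: "lens W k \<subseteq> - XR_W W"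
proof
  fix p assume p: "p \<in> lens W k"
  obtain x y where xy: "p = (x,y)" by (cases p)
  have "x > 0" "y\<^sup>2 < qW W x" using p xy lens_mem by auto
  thus "p \<in> - XR_W W" using X_pos[of x y W] xy by auto
qed

lemma lens_bounded: "bounded (lens W k)"
proof -
  have "lens W k \<subseteq> {(real k * pi)\<^sup>2..((real k + 1) * pi)\<^sup>2} \<times> {-1..1}"
  proof
    fix p assume p: "p \<in> lens W k"
    obtain x y where xy: "p = (x,y)" by (cases p)
    have x: "x > 0" using p xy lens_mem by auto
    have "y\<^sup>2 < 1" using p xy qW_le1[OF x, of W] unfolding lens_def by auto
    hence "\<bar>y\<bar> < 1" by (simp add: abs_square_less_1)
    thus "p \<in> {(real k * pi)\<^sup>2..((real k + 1) * pi)\<^sup>2} \<times> {-1..1}"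
      using p xy unfolding lens_def by auto
  qed
  moreover have "bounded ({(real k * pi)\<^sup>2..((real k + 1) * pi)\<^sup>2} \<times> {-1..(1::real)})"
    by (intro bounded_Times bounded_closed_interval)
  ultimately show ?thesis using bounded_subset by blast
qed

lemma lens_connected: "connected (lens W k)"
proof -
  define a where "a = (real k * pi)\<^sup>2"
  define b where "b = ((real k + 1) * pi)\<^sup>2"
  define R where "R = {a<..<b} \<times> {-1<..<(1::real)}"
  define h where "h = (\<lambda>p::real\<times>real. (fst p, snd p * sqrt (qW W (fst p))))"
  have a0: "a \<ge> 0" by (simp add: a_def)
  have "connected R" unfolding R_def
    by (intro convex_connected convex_Times convex_box) (simp_all add: convex_real_interval)
  moreover have "continuous_on R h" unfolding h_def
    by (intro continuous_intros continuous_on_compose2[OF qW_cont]) auto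
  ultimately have c: "connected (h ` R)" by (metis connected_continuous_image)
  have "h ` R = lens W k"
  proof (intro equalityI subsetI)
    fix p assume "p \<in> h ` R"
    then obtain x t where xt: "a < x" "x < b" "-1 < t" "t < 1" and p: "p = (x, t * sqrt (qW W x))"
      by (auto simp: R_def h_def)
    have ex: "0 < x \<and> real k * pi < sqrt x \<and> sqrt x < (real k + 1) * pi"
      using sq_bounds[of k x] xt by (simp add: a_def b_def)
    hence q: "qW W x > 0" using qW_pos_between by blast
    have "t\<^sup>2 < 1" using xt by (simp add: abs_square_less_1 abs_less_iff)
    hence "(t * sqrt (qW W x))\<^sup>2 < qW W x" using q by (simp add: power_mult_distrib)
    thus "p \<in> lens W k" using xt p by (simp add: lens_def a_def b_def)
  next
    fix p assume p: "p \<in> lens W k"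
    obtain x y where xy: "p = (x,y)" by (cases p)
    have xi: "a < x" "x < b" and yq: "y\<^sup>2 < qW W x" using p xy by (auto simp: lens_def a_def b_def)
    have "0 < x \<and> real k * pi < sqrt x \<and> sqrt x < (real k + 1) * pi"
      using sq_bounds[of k x] xi by (simp add: a_def b_def)
    hence q: "qW W x > 0" using qW_pos_between by blast
    define t where "t = y / sqrt (qW W x)"
    have sq: "sqrt (qW W x) > 0" using q by simp
    have "\<bar>y\<bar> < sqrt (qW W x)" using yq q by (simp add: real_less_rsqrt abs_less_iff)
    hence "\<bar>t\<bar> < 1" using sq by (simp add: t_def abs_divide)
    moreover have "y = t * sqrt (qW W x)" using sq by (simp add: t_def)
    ultimately show "p \<in> h ` R" using xi xy
      by (auto simp: R_def h_def abs_less_iff intro!: image_eqI[where x="(x,t)"])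
  qed
  thus ?thesis using c by simp
qed


lemma lens_component:
  assumes p0: "p0 \<in> lens W k"
  shows "connected_component_set (- XR_W W) p0 = lens W k"
proof
  show "lens W k \<subseteq> connected_component_set (- XR_W W) p0"
    by (rule connected_component_maximal[OF p0 lens_connected lens_sub])
next
  define Os where "Os = {p. sqrt (fst p) < real k * pi} \<union> {p. (real k + 1) * pi < sqrt (fst p)} \<union>
                      {p. qW W (fst p) < (snd p)\<^sup>2}"
  have oO: "open Os" unfolding Os_def
    by (intro open_Un open_Collect_less continuous_intros continuous_on_compose2[OF qW_cont]) auto
  have cover: "- XR_W W \<subseteq> lens W k \<union> Os"
  proof
    fix p assume pS: "p \<in> - XR_W W"
    obtain x y where xy: "p = (x,y)" by (cases p)
    show "p \<in> lens W k \<union> Os"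
    proof (rule ccontr)
      assume n: "p \<notin> lens W k \<union> Os"
      hence b1: "real k * pi \<le> sqrt x" and b2: "sqrt x \<le> (real k + 1) * pi" and yq: "y\<^sup>2 \<le> qW W x"
        by (auto simp: Os_def xy)
      have nX: "(x,y) \<notin> XR_W W" using pS xy by simp
      show False
      proof (cases "x > 0")
        case False
        hence "sqrt x \<le> 0" by simp
        hence "sqrt x = 0" using b1 by (smt (verit) pi_gt_zero zero_le_mult_iff of_nat_0_le_iff)
        hence x0: "x = 0" by simp
        have "(x,y) \<in> XR_W W"
        proof (cases W)
          case A_half_inf
          hence "y\<^sup>2 \<le> 0" using yq x0 by (simp add: qW_def gR_def)
          hence "y = 0" by simp
          thus ?thesis using A_half_inf x0 by (simp add: XR_eq fRA_pt gR_def)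
        next
          case D_half_inf
          thus ?thesis using x0 by (simp add: XR_eq fRD_pt gR_def)
        qed
        thus False using nX by simp
      next
        case True
        have ne: "y\<^sup>2 \<noteq> qW W x" using nX X_pos[OF True] by simp
        show False
        proof (cases "sqrt x = real k * pi \<or> sqrt x = (real k + 1) * pi")
          case True
          then obtain j :: nat where j: "sqrt x = real j * pi"
          proof
            assume "sqrt x = real k * pi" thus ?thesis using that by blast
          next
            assume "sqrt x = (real k + 1) * pi"
            hence "sqrt x = real (k+1) * pi" by simp
            thus ?thesis using that by blast
          qed
          have "j \<ge> 1" using j(1) \<open>x > 0\<close> by (cases j) auto
          moreover have "x = (real j * pi)\<^sup>2" using j(1) \<open>x > 0\<close> by (metis real_sqrt_pow2 less_imp_le)
          ultimately have "qW W x = 0" using qW_sq0 by simp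
          thus False using yq ne by (smt (verit) zero_le_power2)
        next
          case False
          hence "real k * pi < sqrt x" "sqrt x < (real k + 1) * pi" using b1 b2 by auto
          hence "(x,y) \<in> lens W k" using \<open>x > 0\<close> yq ne by (simp add: lens_mem)
          thus False using n xy by simp
        qed
      qed
    qed
  qed
  have "p \<notin> Os" if "p \<in> lens W k" for p
    using that by (cases p) (simp add: lens_mem Os_def)
  hence disj: "lens W k \<inter> Os = {}" by blast
  let ?C = "connected_component_set (- XR_W W) p0"
  have "?C \<subseteq> lens W k \<union> Os" using connected_component_subset cover by blast
  hence "lens W k \<inter> ?C = {} \<or> Os \<inter> ?C = {}"
    using connectedD[OF connected_connected_component lens_open oO] disj by blast
  moreover have "p0 \<in> lens W k \<inter> ?C"
    using p0 lens_sub[of W k] by (auto intro: connected_component_refl)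
  ultimately have "Os \<inter> ?C = {}" by blast
  thus "?C \<subseteq> lens W k" using \<open>?C \<subseteq> lens W k \<union> Os\<close> by blast
qed

lemma unbounded_component:
  assumes T: "connected T" "p \<in> T" "T \<subseteq> S" "\<not> bounded T"
  shows "\<not> bounded (connected_component_set S p)"
  using connected_component_maximal[OF T(2,1,3)] T(4) bounded_subset by blast

lemma vray:
  fixes x y :: real
  assumes out: "\<And>y'. y\<^sup>2 \<le> y'\<^sup>2 \<Longrightarrow> (x,y') \<in> S"
  shows "\<not> bounded (connected_component_set S (x,y))"
proof -
  define \<sigma> :: real where "\<sigma> = (if y \<ge> 0 then 1 else -1)"
  define T where "T = (\<lambda>t. (x, y + t*\<sigma>)) ` {0..}"
  have ab: "\<bar>y + t*\<sigma>\<bar> = \<bar>y\<bar> + t" if "t \<ge> 0" for t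
    using that by (auto simp: \<sigma>_def)
  have "connected T" unfolding T_def
    by (intro connected_continuous_image continuous_intros) simp
  moreover have "(x,y) \<in> T" unfolding T_def by (auto intro!: image_eqI[where x=0])
  moreover have "T \<subseteq> S"
  proof
    fix q assume "q \<in> T"
    then obtain t where t: "t \<ge> 0" "q = (x, y + t*\<sigma>)" by (auto simp: T_def)
    have "\<bar>y\<bar> \<le> \<bar>y + t*\<sigma>\<bar>" using ab t by simp
    hence "y\<^sup>2 \<le> (y + t*\<sigma>)\<^sup>2" by (simp add: abs_le_square_iff)
    thus "q \<in> S" using out t by simp
  qed
  moreover have "\<not> bounded T"
  proof
    assume "bounded T"
    then obtain B where B: "\<And>q. q \<in> T \<Longrightarrow> norm q \<le> B" by (auto simp: bounded_iff)
    define t where "t = \<bar>B\<bar> + 1"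
    have "(x, y + t*\<sigma>) \<in> T" unfolding T_def t_def by (auto intro!: image_eqI)
    hence "norm (x, y + t*\<sigma>) \<le> B" by (rule B)
    moreover have "norm (y + t*\<sigma>) \<le> norm (x, y + t*\<sigma>)" by (rule norm_snd_le)
    moreover have "norm (y + t*\<sigma>) = \<bar>y\<bar> + t" using ab[of t] by (simp add: t_def)
    ultimately show False by (simp add: t_def)
  qed
  ultimately show ?thesis by (rule unbounded_component)
qed

lemma lray:
  fixes x y :: real
  assumes x: "x < 0" and yl: "y\<^sup>2 < (sR x)\<^sup>2"
  shows "\<not> bounded (connected_component_set (- XR_W D_half_inf) (x,y))"
proof -
  have X: "(a,b) \<in> XR_W D_half_inf \<longleftrightarrow> a * ((sR a)\<^sup>2 - b\<^sup>2) = 0" for a b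
    by (simp add: XR_eq fRD_pt gR_def algebra_simps)
  define T1 where "T1 = (\<lambda>\<tau>. (x, \<tau> * y)) ` {0..1}"
  define T2 where "T2 = (\<lambda>t. (x - t, 0::real)) ` {0..}"
  have c1: "connected T1" unfolding T1_def by (intro connected_continuous_image continuous_intros) simp
  have c2: "connected T2" unfolding T2_def by (intro connected_continuous_image continuous_intros) simp
  have "(x,0) \<in> T1" unfolding T1_def by (auto intro!: image_eqI[where x=0])
  moreover have "(x,0) \<in> T2" unfolding T2_def by (auto intro!: image_eqI[where x=0])
  ultimately have c: "connected (T1 \<union> T2)" using c1 c2 by (intro connected_Un) auto
  have "(x,y) \<in> T1" unfolding T1_def by (auto intro!: image_eqI[where x=1])
  hence p: "(x,y) \<in> T1 \<union> T2" by simp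
  have sub: "T1 \<union> T2 \<subseteq> - XR_W D_half_inf"
  proof
    fix q assume "q \<in> T1 \<union> T2"
    thus "q \<in> - XR_W D_half_inf"
    proof
      assume "q \<in> T1"
      then obtain \<tau> where t: "0 \<le> \<tau>" "\<tau> \<le> 1" "q = (x, \<tau> * y)" by (auto simp: T1_def)
      have "\<tau>\<^sup>2 * y\<^sup>2 \<le> y\<^sup>2" using t by (intro mult_left_le_one_le) (auto intro: power_le_one)
      hence "(\<tau> * y)\<^sup>2 \<le> y\<^sup>2" by (simp add: power_mult_distrib)
      hence "(\<tau> * y)\<^sup>2 < (sR x)\<^sup>2" using yl by simp
      thus ?thesis using t x X by simp
    next
      assume "q \<in> T2"
      then obtain t where t: "0 \<le> t" "q = (x - t, 0)" by (auto simp: T2_def)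
      have "x - t \<le> 0" using t x by simp
      hence "sR (x - t) \<noteq> 0" by (rule sR_nonpos_nz)
      thus ?thesis using t x X by simp
    qed
  qed
  have "\<not> bounded T2"
  proof
    assume "bounded T2"
    then obtain B where B: "\<And>q. q \<in> T2 \<Longrightarrow> norm q \<le> B" by (auto simp: bounded_iff)
    define t where "t = \<bar>B\<bar> + 1"
    have "(x - t, 0::real) \<in> T2" unfolding T2_def t_def by (auto intro!: image_eqI)
    hence "norm (x - t, 0::real) \<le> B" by (rule B)
    moreover have "norm (x - t) \<le> norm (x - t, 0::real)" by (rule norm_fst_le)
    moreover have "norm (x - t) = t - x" using x by (simp add: t_def)
    ultimately show False using x by (simp add: t_def)
  qed
  hence "\<not> bounded (T1 \<union> T2)" using bounded_subset by blast
  thus ?thesis by (rule unbounded_component[OF c p sub])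
qed

lemma sqrt_floor: assumes "x > 0" obtains k :: nat where "real k * pi \<le> sqrt x" "sqrt x < (real k + 1) * pi"
proof -
  define r where "r = sqrt x / pi"
  have r0: "r \<ge> 0" using assms by (simp add: r_def)
  define k where "k = nat \<lfloor>r\<rfloor>"
  have kr: "real k = of_int \<lfloor>r\<rfloor>" using r0 by (simp add: k_def)
  have "real k \<le> r" "r < real k + 1" using kr by linarith+
  hence "real k * pi \<le> sqrt x" "sqrt x < (real k + 1) * pi"
    by (simp_all add: r_def field_simps)
  thus ?thesis using that by blast
qed

lemma pos_not_lens:
  assumes x: "x > 0" and nX: "(x,y) \<notin> XR_W W" and nl: "\<And>k. (x,y) \<notin> lens W k"
  shows "qW W x < y\<^sup>2"
proof -
  obtain k where k: "real k * pi \<le> sqrt x" "sqrt x < (real k + 1) * pi" using sqrt_floor[OF x] by blast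
  have ne: "y\<^sup>2 \<noteq> qW W x" using nX X_pos[OF x] by simp
  show ?thesis
  proof (cases "real k * pi = sqrt x")
    case True
    have "k \<ge> 1" using True x by (cases k) auto
    moreover have "x = (real k * pi)\<^sup>2" using True x by (metis real_sqrt_pow2 less_imp_le)
    ultimately have "qW W x = 0" using qW_sq0 by simp
    thus ?thesis using ne by (smt (verit) zero_le_power2)
  next
    case False
    hence "real k * pi < sqrt x" using k by simp
    hence "\<not> y\<^sup>2 < qW W x" using nl[of k] x k by (simp add: lens_mem)
    thus ?thesis using ne by simp
  qed
qed

lemma not_lens_unbounded:
  assumes pS: "p \<in> - XR_W W" and nl: "\<And>k. p \<notin> lens W k"
  shows "\<not> bounded (connected_component_set (- XR_W W) p)"
proof -
  obtain x y where xy: "p = (x,y)" by (cases p)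
  have nX: "(x,y) \<notin> XR_W W" using pS xy by simp
  have nl': "\<And>k. (x,y) \<notin> lens W k" using nl xy by simp
  show ?thesis
  proof (cases W)
    case A_half_inf
    have XA: "(a,b) \<in> XR_W W \<longleftrightarrow> b\<^sup>2 = gR a" for a b
      using A_half_inf by (auto simp: XR_eq fRA_pt)
    have lt: "gR x < y\<^sup>2"
    proof (cases "x > 0")
      case True thus ?thesis using pos_not_lens[OF True nX nl'] A_half_inf by (simp add: qW_def)
    next
      case False
      hence "gR x \<le> 0" by (simp add: gR_def mult_nonpos_nonneg)
      moreover have "y\<^sup>2 \<noteq> gR x" using nX XA by simp
      ultimately show ?thesis by (smt (verit) zero_le_power2)
    qed
    have "\<not> bounded (connected_component_set (- XR_W W) (x,y))"
      by (rule vray) (use lt XA in auto)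
    thus ?thesis using xy by simp
  next
    case D_half_inf
    have XD: "(a,b) \<in> XR_W W \<longleftrightarrow> a * ((sR a)\<^sup>2 - b\<^sup>2) = 0" for a b
      using D_half_inf by (simp add: XR_eq fRD_pt gR_def algebra_simps)
    have x0: "x \<noteq> 0" using nX XD by auto
    have ne: "y\<^sup>2 \<noteq> (sR x)\<^sup>2" using nX XD by auto
    show ?thesis
    proof (cases "(sR x)\<^sup>2 < y\<^sup>2")
      case True
      have "\<not> bounded (connected_component_set (- XR_W W) (x,y))"
        by (rule vray) (use True x0 XD in auto)
      thus ?thesis using xy by simp
    next
      case False
      hence lt: "y\<^sup>2 < (sR x)\<^sup>2" using ne by simp
      have "x < 0"
      proof (rule ccontr)
        assume "\<not> x < 0" hence "x > 0" using x0 by simp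
        from pos_not_lens[OF this nX nl'] D_half_inf lt show False by (simp add: qW_def)
      qed
      thus ?thesis using lray[OF _ lt] xy D_half_inf by simp
    qed
  qed
qed


lemma four_Pt: "4 * (real m * pi / 2)\<^sup>2 = (real m * pi)\<^sup>2"
  by (simp add: power_divide)

lemma hess_q:
  assumes q: "q \<in> CritR W"
  shows "nondegenerate (hessian (fR_W W) q) \<and>
         (fR_W W q = 0 \<longrightarrow> indefinite (hessian (fR_W W) q)) \<and>
         (fR_W W q = 1 \<longrightarrow> neg_definite (hessian (fR_W W) q))"
proof (cases "q \<in> Pt ` {1..}")
  case True
  then obtain m where m: "m \<ge> 1" "q = Pt m" by auto
  define x0 where "x0 = (real m * pi / 2)\<^sup>2"
  have x0: "x0 > 0" using m by (simp add: x0_def)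
  define h where "h = 4 * sRd (4 * x0)"
  have h: "h = 2 * (-1)^m / (real m * pi)\<^sup>2"
    using m sRd_sq[of m] by (simp add: h_def x0_def four_Pt)
  have mp: "(real m * pi)\<^sup>2 > 0" using m by simp
  have q': "q = (x0, 0)" using m by (simp add: Pt_def x0_def)
  have fq: "fR_W W q = (if even m then 0 else 1)" using fR_Pt[OF m(1)] m by simp
  define H where "H = hessian (fR_W W) q"
  have H: "H$1$1 = h" "H$1$2 = 0" "H$2$1 = 0" "H$2$2 < 0"
    using x0 by (cases W; simp add: H_def q' hessA hessD h_def)+
  show ?thesis
  proof (cases "even m")
    case True
    hence "h > 0" using h mp by simp
    hence "det H < 0" using H by (simp add: det_2 mult_pos_neg)
    thus ?thesis using indef2[of H] H fq True unfolding H_def nondegenerate_def by auto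
  next
    case False
    hence "h < 0" using h mp by simp
    hence "det H \<noteq> 0" using H by (simp add: det_2)
    moreover have "neg_definite H" using negdef2[of H] H \<open>h < 0\<close> by simp
    ultimately show ?thesis using fq False unfolding H_def nondegenerate_def by auto
  qed
next
  case False
  hence W: "W = D_half_inf" and qs: "q = (0,1) \<or> q = (0,-1)" using q by (auto simp: CritR_def split: if_splits)
  then obtain \<sigma> where s: "q = (0, \<sigma>)" "\<sigma>\<^sup>2 = 1" by auto
  define H where "H = hessian (fR_W W) q"
  have H: "H$1$2 = -2*\<sigma>" "H$2$1 = -2*\<sigma>" "H$2$2 = 0"
    by (simp_all add: H_def s(1) W hessD)
  have "det H = - 4" using H s(2) by (simp add: det_2 power2_eq_square)
  hence "det H < 0" by simp
  moreover have "fR_W W q = 0" by (simp add: W s(1) fRD_pt gR_def)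
  ultimately show ?thesis using indef2[of H] H unfolding H_def nondegenerate_def by auto
qed

lemma C1R_eq: "{q \<in> CritR W. fR_W W q = 1} = range (\<lambda>k. Pt (2*k+1))"
proof (intro equalityI subsetI)
  fix q assume q: "q \<in> {q \<in> CritR W. fR_W W q = 1}"
  show "q \<in> range (\<lambda>k. Pt (2*k+1))"
  proof (cases "q \<in> Pt ` {1..}")
    case True
    then obtain m where m: "m \<ge> 1" "q = Pt m" by auto
    hence "odd m" using q fR_Pt[OF m(1), of W] by (auto split: if_splits)
    then obtain k where "m = 2*k+1" using oddE by blast
    thus ?thesis using m by auto
  next
    case False
    hence "q = (0,1) \<or> q = (0,-1)" "W = D_half_inf" using q by (auto simp: CritR_def split: if_splits)
    hence "fR_W W q = 0" by (auto simp: fRD_pt gR_def)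
    thus ?thesis using q by simp
  qed
next
  fix q assume "q \<in> range (\<lambda>k. Pt (2*k+1))"
  then obtain k where k: "q = Pt (2*k+1)" by auto
  have "fR_W W q = 1" using fR_Pt[of "2*k+1" W] k by simp
  moreover have "q \<in> CritR W" using k by (auto simp: CritR_def)
  ultimately show "q \<in> {q \<in> CritR W. fR_W W q = 1}" by simp
qed

lemma Pt_odd_lens: "Pt (2*k+1) \<in> lens W k"
proof -
  define r where "r = (real (2*k+1) * pi / 2)"
  have r: "r > 0" by (simp add: r_def)
  have P: "Pt (2*k+1) = (r\<^sup>2, 0)" by (simp add: Pt_def r_def)
  have sq: "sqrt (r\<^sup>2) = r" using r by simp
  have a: "real k * pi < r" "r < (real k + 1) * pi" by (simp_all add: r_def field_simps)
  hence "qW W (r\<^sup>2) > 0" using qW_pos_between[of k "r\<^sup>2"] r sq by simp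
  thus ?thesis unfolding P lens_mem using r sq a by simp
qed

lemma lens_inj: assumes "lens W k = lens W j" shows "k = j"
proof -
  define r where "r = (real (2*k+1) * pi / 2)"
  have r: "r > 0" by (simp add: r_def)
  have P: "Pt (2*k+1) = (r\<^sup>2, 0)" by (simp add: Pt_def r_def)
  have sq: "sqrt (r\<^sup>2) = r" using r by simp
  have "Pt (2*k+1) \<in> lens W j" using Pt_odd_lens[of k W] assms by simp
  hence "real j * pi < r" "r < (real j + 1) * pi" unfolding P lens_mem sq by simp_all
  moreover have r': "r = (real k + 1/2) * pi" by (simp add: r_def field_simps)
  ultimately have "real j * pi < (real k + 1/2) * pi" "(real k + 1/2) * pi < (real j + 1) * pi" by simp_all
  hence "real j < real k + 1/2" "real k + 1/2 < real j + 1"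
    using mult_less_cancel_right_pos[OF pi_gt_zero] by blast+
  thus ?thesis by linarith
qed

lemma comp_lens: "connected_component_set (- XR_W W) (Pt (2*k+1)) = lens W k"
  by (rule lens_component[OF Pt_odd_lens])

lemma bounded_components: "{B \<in> components (- XR_W W). bounded B} = range (lens W)"
proof (intro equalityI subsetI)
  fix B assume B: "B \<in> {B \<in> components (- XR_W W). bounded B}"
  then obtain p where p: "p \<in> - XR_W W" "B = connected_component_set (- XR_W W) p"
    by (auto simp: components_iff)
  show "B \<in> range (lens W)"
  proof (cases "\<exists>k. p \<in> lens W k")
    case True
    then obtain k where "p \<in> lens W k" by blast
    thus ?thesis using lens_component p by auto
  next
    case False
    hence "\<not> bounded B" using not_lens_unbounded[OF p(1)] p(2) by blast
    thus ?thesis using B by simp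
  qed
next
  fix B assume "B \<in> range (lens W)"
  then obtain k where k: "B = lens W k" by auto
  have "Pt (2*k+1) \<in> - XR_W W" using lens_sub Pt_odd_lens by blast
  moreover have "B = connected_component_set (- XR_W W) (Pt (2*k+1))" using comp_lens[of W k] k by simp
  ultimately have "B \<in> components (- XR_W W)" unfolding components_iff by blast
  thus "B \<in> {B \<in> components (- XR_W W). bounded B}" using lens_bounded k by simp
qed

theorem theorem2:
  fixes W :: W_type
  defines "C0 \<equiv> crit_W W \<inter> f_W W -` {0}"
      and "C1 \<equiv> crit_W W \<inter> f_W W -` {1}"
  shows "crit_W W \<subseteq> range realpt \<and>
     (\<forall>c\<in>crit_W W. nondegenerate (hessian (fR_W W) (Re (fst c), Re (snd c)))) \<and>
     (\<forall>c\<in>C0. indefinite (hessian (fR_W W) (Re (fst c), Re (snd c)))) \<and>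
     (\<forall>c\<in>C1. neg_definite (hessian (fR_W W) (Re (fst c), Re (snd c)))) \<and>
     C0 = realpt ` {p. is_node (XR_W W) p} \<and>
     bij_betw (\<lambda>c. connected_component_set (- XR_W W) (Re (fst c), Re (snd c))) C1
           {B \<in> components (- XR_W W). bounded B}"
proof -
  have fv: "f_W W (realpt q) = v \<longleftrightarrow> fR_W W q = Re v \<and> Im v = 0" for q v
    by (auto simp: f_realpt_fR complex_eq_iff)
  have C0e: "C0 = realpt ` {q \<in> CritR W. fR_W W q = 0}"
    unfolding C0_def crit_eq by (auto simp: fv)
  have C1e: "C1 = realpt ` {q \<in> CritR W. fR_W W q = 1}"
    unfolding C1_def crit_eq by (auto simp: fv)
  have i: "crit_W W \<subseteq> range realpt" unfolding crit_eq by auto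
  have ii: "\<forall>c\<in>crit_W W. nondegenerate (hessian (fR_W W) (Re (fst c), Re (snd c)))"
    unfolding crit_eq using hess_q by auto
  have iii: "\<forall>c\<in>C0. indefinite (hessian (fR_W W) (Re (fst c), Re (snd c)))"
    unfolding C0e using hess_q by auto
  have iv: "\<forall>c\<in>C1. neg_definite (hessian (fR_W W) (Re (fst c), Re (snd c)))"
    unfolding C1e using hess_q by auto
  have v: "C0 = realpt ` {p. is_node (XR_W W) p}"
    unfolding C0e nodes_eq C0R_def ..
  have C1r: "C1 = range (\<lambda>k. realpt (Pt (2*k+1)))" unfolding C1e C1R_eq by auto
  let ?F = "\<lambda>c. connected_component_set (- XR_W W) (Re (fst c), Re (snd c))"
  have Fk: "?F (realpt (Pt (2*k+1))) = lens W k" for k by (simp only: Re_realpt) (rule comp_lens)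
  have "inj_on ?F C1"
  proof
    fix c d assume c: "c \<in> C1" and d: "d \<in> C1" and e: "?F c = ?F d"
    obtain k where k: "c = realpt (Pt (2*k+1))" using c C1r by auto
    obtain j where j: "d = realpt (Pt (2*j+1))" using d C1r by auto
    have "lens W k = lens W j" using e Fk k j by simp
    hence "k = j" by (rule lens_inj)
    thus "c = d" using k j by simp
  qed
  moreover have "?F ` C1 = {B \<in> components (- XR_W W). bounded B}"
    unfolding bounded_components C1r image_image Fk ..
  ultimately have vi: "bij_betw ?F C1 {B \<in> components (- XR_W W). bounded B}"
    by (simp add: bij_betw_def)
  show ?thesis using i ii iii iv v vi by blast
qed


end
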